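(* Let $k\ge1$ be an integer, $a\in\{0,1\}$, $\delta=\delta_{a,1}$. For every integer $M\ge0$, $$\sum_{\substack{n_1,\dots,n_{k+1}\ge0\\ n_{k+1}\equiv a\ (\mathrm{mod}\ 2)}}\frac{q^{N_1^2+\cdots+N_{k+1}^2}(q)_{2M}}{(q)_{M-N_1}(q)_{n_1}\cdots(q)_{n_k}(q^2;q^2)_{n_{k+1}}(q;q^2)_{n_k+n_{k+1}}}$$ $$=\sum_{j\in\mathbb Z}q^{12(2+3k)j^2+2j(1-6\delta(1+k))+(1+k)\delta}\begin{bmatrix}2M\\ M-6j+a\end{bmatrix}_q-\sum_{j\in\mathbb Z}q^{12(2+3k)j^2+2j(-7-12k-6\delta(1+k))+2+k(a+2)^2+5\delta}\begin{bmatrix}2M\\ M-6j+a+2\end{bmatrix}_q,$$ where $N_i:=n_i+n_{i+1}+\cdots+n_{k+1}$ for $1\le i\le k+1$.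
   Context: $q$ is complex with $|q|<1$. $(a;q)_n=\prod_{j=0}^{n-1}(1-aq^j)$ for $n\ge0$; $(q)_n=(q;q)_n$; $1/(q)_n:=0$ for $n<0$. The Gaussian binomial is $\begin{bmatrix}n+m\\ n\end{bmatrix}_q=\frac{(q)_{n+m}}{(q)_n(q)_m}$ if $n,m$ are nonnegative integers and $0$ otherwise. $\delta_{a,1}$ is the Kronecker delta. *)

theory Defs
  imports "HOL-Analysis.Analysis"
begin

definition qpoch :: "complex \<Rightarrow> complex \<Rightarrow> nat \<Rightarrow> complex" where
  "qpoch a q n = (\<Prod>j<n. (1 - a * q ^ j))"

definition inv_qfac :: "complex \<Rightarrow> int \<Rightarrow> complex" where
  "inv_qfac q n = (if n < 0 then 0 else 1 / qpoch q q (nat n))"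

definition qbinom :: "complex \<Rightarrow> int \<Rightarrow> int \<Rightarrow> complex" where
  "qbinom q T B = (if 0 \<le> B \<and> 0 \<le> T - B
      then qpoch q q (nat T) / (qpoch q q (nat B) * qpoch q q (nat (T - B))) else 0)"

end

theory Submission
  imports Defs
begin


lemma qpow_ne1: "norm (q::complex) < 1 \<Longrightarrow> n > 0 \<Longrightarrow> q ^ n \<noteq> 1"
proof
  assume "norm q < 1" "n > 0" "q ^ n = 1"
  have "norm (q^n) = norm q ^ n" by (simp add: norm_power)
  also have "\<dots> < 1" using \<open>norm q < 1\<close> \<open>n > 0\<close>
    by (simp add: power_less_one_iff)
  finally show False using \<open>q^n = 1\<close> by simp
qed

lemma one_minus_qpow_nz: "norm (q::complex) < 1 \<Longrightarrow> n > 0 \<Longrightarrow> 1 - q ^ n \<noteq> 0"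
  using qpow_ne1 by force

lemma qpoch_Suc: "qpoch a q (Suc n) = qpoch a q n * (1 - a * q ^ n)"
  by (simp add: qpoch_def)

lemma qpoch_0[simp]: "qpoch a q 0 = 1" by (simp add: qpoch_def)

lemma qpoch_nz: "norm q < 1 \<Longrightarrow> qpoch q q n \<noteq> 0"
proof (induction n)
  case (Suc n)
  have "1 - q * q^n \<noteq> 0" using one_minus_qpow_nz[OF Suc.prems, of "Suc n"] by simp
  then show ?case using Suc by (simp add: qpoch_Suc)
qed simp

lemma qpoch2_nz: "norm q < 1 \<Longrightarrow> qpoch (q^2) (q^2) n \<noteq> 0"
proof (induction n)
  case (Suc n)
  have "1 - q ^ (2 * Suc n) \<noteq> 0" using one_minus_qpow_nz[OF Suc.prems, of "2*Suc n"] by simp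
  hence "1 - q^2 * (q^2)^n \<noteq> 0" by (simp add: power_mult[symmetric] power_add[symmetric])
  then show ?case using Suc by (simp add: qpoch_Suc)
qed simp

lemma qpoch12_nz: "norm q < 1 \<Longrightarrow> qpoch q (q^2) n \<noteq> 0"
proof (induction n)
  case (Suc n)
  have "1 - q ^ (Suc (2 * n)) \<noteq> 0" using one_minus_qpow_nz[OF Suc.prems, of "Suc (2*n)"] by simp
  hence "1 - q * (q^2)^n \<noteq> 0" by (simp add: power_mult[symmetric])
  then show ?case using Suc by (simp add: qpoch_Suc)
qed simp

definition qb :: "complex \<Rightarrow> nat \<Rightarrow> nat \<Rightarrow> complex" where
  "qb q n k = (if k \<le> n then qpoch q q n / (qpoch q q k * qpoch q q (n-k)) else 0)"

lemma qbinom_nat: "qbinom q (int n) (int k) = qb q n k"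
  by (auto simp: qbinom_def qb_def nat_diff_distrib)

lemma qbinom_negB: "B < 0 \<Longrightarrow> qbinom q T B = 0" by (simp add: qbinom_def)
lemma qbinom_bigB: "B > T \<Longrightarrow> qbinom q T B = 0" by (simp add: qbinom_def)

lemma qb_0[simp]: assumes "norm q < 1" shows "qb q n 0 = 1" using qpoch_nz[OF assms, of n] by (simp add: qb_def)
lemma qb_n[simp]: assumes "norm q < 1" shows "qb q n n = 1" using qpoch_nz[OF assms, of n] by (simp add: qb_def)
lemma qb_big: "k > n \<Longrightarrow> qb q n k = 0" by (simp add: qb_def)

lemma pas_alg: fixes a b c x y :: complex
  shows "b\<noteq>0 \<Longrightarrow> c\<noteq>0 \<Longrightarrow> 1-x\<noteq>0 \<Longrightarrow> 1-y\<noteq>0 \<Longrightarrow>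
   a*((1-x)+x*(1-y))/(b*(1-x)*(c*(1-y))) = a/(b*(c*(1-y))) + x*(a/(b*(1-x)*c))"
proof -
  assume h: "b\<noteq>0" "c\<noteq>0" "1-x\<noteq>0" "1-y\<noteq>0"
  define D where "D = b*(1-x)*(c*(1-y))"
  have 1: "a/(b*(c*(1-y))) = (a*(1-x))/D" unfolding D_def using h by simp
  have 2: "x*(a/(b*(1-x)*c)) = (x*a*(1-y))/D" unfolding D_def using h by simp
  have "a*((1-x)+x*(1-y)) = a*(1-x) + x*a*(1-y)" by (simp add: algebra_simps)
  thus ?thesis unfolding 1 2 D_def[symmetric] by (simp add: add_divide_distrib)
qed

lemma qb_pascal1:
  assumes q: "norm q < 1"
  shows "qb q (Suc n) (Suc k) = qb q n k + q ^ Suc k * qb q n (Suc k)"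
proof (cases "Suc k \<le> n")
  case True
  define a where "a = qpoch q q n"
  define b where "b = qpoch q q k"
  define c where "c = qpoch q q (n - Suc k)"
  have a0: "a \<noteq> 0" "b \<noteq> 0" "c\<noteq>0" using qpoch_nz[OF q] by (auto simp: a_def b_def c_def)
  have e1: "1 - q^Suc n \<noteq> 0" "1 - q^Suc k \<noteq> 0" "1 - q^(n-k) \<noteq> 0"
    using one_minus_qpow_nz[OF q, of "Suc n"] one_minus_qpow_nz[OF q, of "Suc k"]
      one_minus_qpow_nz[OF q, of "n-k"] True by auto
  have nk: "n - k = Suc (n - Suc k)" using True by simp
  have "qpoch q q (Suc n) = a * (1 - q^Suc n)" by (simp add: qpoch_Suc a_def)
  moreover have "qpoch q q (Suc k) = b * (1 - q^Suc k)" by (simp add: qpoch_Suc b_def)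
  moreover have "qpoch q q (n - k) = c * (1 - q^(n-k))"
    by (simp add: nk qpoch_Suc c_def)
  moreover have "qb q (Suc n) (Suc k) = qpoch q q (Suc n) / (qpoch q q (Suc k) * qpoch q q (n - k))"
    using True by (simp add: qb_def)
  moreover have "qb q n k = a / (b * qpoch q q (n-k))" using True by (simp add: qb_def a_def b_def)
  moreover have "qb q n (Suc k) = a / (qpoch q q (Suc k) * c)" using True by (simp add: qb_def a_def c_def)
  moreover have key: "1 - q^Suc n = (1 - q^Suc k) + q^Suc k * (1 - q^(n-k))"
  proof -
    have "q^Suc k * q^(n-k) = q^Suc n" using True by (simp flip: power_add)
    thus ?thesis by (simp add: algebra_simps)
  qed
  ultimately have eqs: "qb q (Suc n) (Suc k) = a * ((1 - q^Suc k) + q^Suc k * (1 - q^(n-k))) / (b * (1 - q^Suc k) * (c * (1 - q^(n-k))))"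
    "qb q n k = a / (b * (c * (1 - q^(n-k))))" "qb q n (Suc k) = a / (b * (1 - q^Suc k) * c)"
    by simp_all
  show ?thesis unfolding eqs using a0 e1 by (intro pas_alg) auto
next
  case False
  then consider "n = k" | "n < k" by linarith
  then show ?thesis
  proof cases
    case 1 then show ?thesis using q by (simp add: qb_big)
  next
    case 2 then show ?thesis by (simp add: qb_big)
  qed
qed


lemma qbinom_sym: "qbinom q T B = qbinom q T (T - B)"
  by (auto simp: qbinom_def mult.commute)

lemma qbinom_P1:
  assumes q: "norm q < 1" and n: "n \<ge> 1"
  shows "qbinom q n k = qbinom q (n-1) (k-1) + q powi k * qbinom q (n-1) k"
proof -
  define n' where "n' = nat n - 1"
  have n': "n = int (Suc n')" using n by (simp add: n'_def)
  consider "k < 0" | "k = 0" | k' where "k = int (Suc k')"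
  proof (cases "k < 0 \<or> k = 0")
    case False
    hence "k = int (Suc (nat k - 1))" by simp
    thus ?thesis using that by blast
  qed auto
  then show ?thesis
  proof cases
    case 1 thus ?thesis by (simp add: qbinom_negB)
  next
    case 2 thus ?thesis using q by (simp add: qbinom_negB n' qbinom_nat[of q n' 0, simplified] qbinom_nat[of q "Suc n'" 0, simplified])
  next
    case 3
    have "qbinom q n k = qb q (Suc n') (Suc k')" by (simp only: n' 3 qbinom_nat)
    moreover have n1: "n - 1 = int n'" "k - 1 = int k'" using n' 3 by simp_all
    have "qbinom q (n-1) (k-1) = qb q n' k'" by (simp only: n1 qbinom_nat)
    moreover have "qbinom q (n-1) k = qb q n' (Suc k')" by (simp only: n1(1) 3 qbinom_nat)
    moreover have "q powi k = q ^ Suc k'" by (simp only: 3 power_int_of_nat)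
    ultimately show ?thesis using qb_pascal1[OF q] by simp
  qed
qed

lemma qbinom_P2:
  assumes q: "norm q < 1" and n: "n \<ge> 1"
  shows "qbinom q n k = qbinom q (n-1) k + q powi (n-k) * qbinom q (n-1) (k-1)"
proof -
  have "qbinom q n k = qbinom q n (n-k)" by (rule qbinom_sym)
  also have "\<dots> = qbinom q (n-1) (n-k-1) + q powi (n-k) * qbinom q (n-1) (n-k)"
    by (rule qbinom_P1[OF q n])
  also have "qbinom q (n-1) (n-k-1) = qbinom q (n-1) k"
    using qbinom_sym[of q "n-1" k] by (simp add: algebra_simps)
  also have "qbinom q (n-1) (n-k) = qbinom q (n-1) (k-1)"
    using qbinom_sym[of q "n-1" "k-1"] by simp
  finally show ?thesis .
qed

lemma qbinom_P3:
  assumes q: "norm q < 1" and n: "n \<ge> 1"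
  shows "(1 - q ^ nat n) * qbinom q (n-1) k = (1 - q powi (n-k)) * qbinom q n k"
proof (cases "k < 0 \<or> k \<ge> n")
  case True
  then consider "k < 0" | "k = n" | "k > n" by linarith
  then show ?thesis by cases (auto simp: qbinom_negB qbinom_bigB)
next
  case False
  define k' where "k' = nat k"
  define m' where "m' = nat (n - k - 1)"
  have k: "k = int k'" and nk: "n = int (Suc (k' + m'))" using False by (simp_all add: k'_def m'_def)
  define a where "a = qpoch q q (k'+m')"
  define b where "b = qpoch q q k'"
  define c where "c = qpoch q q m'"
  have nz: "a \<noteq> 0" "b\<noteq>0" "c\<noteq>0" using qpoch_nz[OF q] by (auto simp: a_def b_def c_def)
  have e: "1 - q ^ Suc (k'+m') \<noteq> 0" "1 - q ^ Suc m' \<noteq> 0"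
    using one_minus_qpow_nz[OF q, of "Suc (k'+m')"] one_minus_qpow_nz[OF q, of "Suc m'"] by auto
  have n1: "n - 1 = int (k'+m')" using nk by simp
  have l: "qbinom q (n-1) k = a/(b*c)" unfolding n1 k qbinom_nat by (simp add: qb_def a_def b_def c_def)
  have r: "qbinom q n k = a*(1 - q ^ Suc (k'+m'))/(b*(c*(1 - q^Suc m')))"
    unfolding nk k qbinom_nat
    by (simp add: qb_def a_def b_def c_def Suc_diff_le qpoch_Suc del: of_nat_Suc)
  have nmk: "n - k = int (Suc m')" by (simp add: nk k)
  have p: "q powi (n-k) = q ^ Suc m'" by (simp only: nmk power_int_of_nat)
  have nn: "nat n = Suc (k'+m')" using nk by simp
  show ?thesis unfolding l r p nn using nz e by simp
qed


lemma fsupp_summable: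
  fixes f :: "'a \<Rightarrow> complex"
  assumes "finite S" "\<And>x. x \<notin> S \<Longrightarrow> f x = 0"
  shows "f summable_on UNIV"
proof -
  have "f summable_on S" using assms(1) by simp
  moreover have "f summable_on S \<longleftrightarrow> f summable_on UNIV"
    by (rule summable_on_cong_neutral) (use assms(2) in auto)
  ultimately show ?thesis by simp
qed

lemma fsupp_infsum:
  fixes f :: "'a \<Rightarrow> complex"
  assumes "finite S" "\<And>x. x \<notin> S \<Longrightarrow> f x = 0"
  shows "(\<Sum>\<^sub>\<infinity>x. f x) = sum f S"
proof -
  have "infsum f UNIV = infsum f S"
    by (rule infsum_cong_neutral) (use assms(2) in auto)
  thus ?thesis using assms(1) by simp
qed

lemma infsum_diff':
  fixes f g :: "'a \<Rightarrow> complex"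
  assumes "f summable_on A" "g summable_on A"
  shows "infsum (\<lambda>x. f x - g x) A = infsum f A - infsum g A"
proof -
  have "(\<lambda>x. - g x) summable_on A" using assms(2) summable_on_uminus by blast
  hence "infsum (\<lambda>x. f x + - g x) A = infsum f A + infsum (\<lambda>x. - g x) A"
    using infsum_add[OF assms(1)] by blast
  thus ?thesis by (simp add: infsum_uminus)
qed

lemma qbinom_nz_bound:
  assumes "qbinom q n (6*i + e) \<noteq> 0"
  shows "i \<in> {-\<bar>e\<bar>..\<bar>n\<bar>+\<bar>e\<bar>}"
proof -
  have "0 \<le> 6*i+e" "6*i+e \<le> n" using assms by (auto simp: qbinom_def split: if_splits)
  thus ?thesis by auto
qed

lemma fam_summable: "(\<lambda>i::int. f i * qbinom q n (6*i + e)) summable_on UNIV"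
  by (rule fsupp_summable[of "{-\<bar>e\<bar>..\<bar>n\<bar>+\<bar>e\<bar>}"]) (auto dest: qbinom_nz_bound)

definition Fam :: "complex \<Rightarrow> int \<Rightarrow> (int \<Rightarrow> int) \<Rightarrow> int \<Rightarrow> complex" where
  "Fam q n c e = (\<Sum>\<^sub>\<infinity>i::int. q powi (c i) * qbinom q n (6*i + e))"

lemma Fam_cong: "(\<And>i. c i = d i) \<Longrightarrow> Fam q n c e = Fam q n d e"
  by (simp add: Fam_def)

lemma Fam_P1:
  assumes q: "norm q < 1" "q \<noteq> 0" and n: "n \<ge> 1"
  shows "Fam q n c e = Fam q (n-1) c (e-1) + Fam q (n-1) (\<lambda>i. c i + 6*i + e) e"
proof -
  have "Fam q n c e = (\<Sum>\<^sub>\<infinity>i::int. q powi (c i) * qbinom q (n-1) (6*i + (e-1))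
         + q powi (c i + 6*i + e) * qbinom q (n-1) (6*i + e))"
    unfolding Fam_def
    by (rule infsum_cong) (simp add: qbinom_P1[OF q(1) n] power_int_add q(2) algebra_simps)
  also have "\<dots> = Fam q (n-1) c (e-1) + Fam q (n-1) (\<lambda>i. c i + 6*i + e) e"
    unfolding Fam_def by (rule infsum_add) (rule fam_summable)+
  finally show ?thesis .
qed

lemma Fam_P2:
  assumes q: "norm q < 1" "q \<noteq> 0" and n: "n \<ge> 1"
  shows "Fam q n c e = Fam q (n-1) c e + Fam q (n-1) (\<lambda>i. c i + n - 6*i - e) (e-1)"
proof -
  have "Fam q n c e = (\<Sum>\<^sub>\<infinity>i::int. q powi (c i) * qbinom q (n-1) (6*i + e)
         + q powi (c i + n - 6*i - e) * qbinom q (n-1) (6*i + (e-1)))"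
    unfolding Fam_def
    by (rule infsum_cong) (simp add: qbinom_P2[OF q(1) n] power_int_add power_int_diff q(2) algebra_simps)
  also have "\<dots> = Fam q (n-1) c e + Fam q (n-1) (\<lambda>i. c i + n - 6*i - e) (e-1)"
    unfolding Fam_def by (rule infsum_add) (rule fam_summable)+
  finally show ?thesis .
qed

lemma Fam_P3:
  assumes q: "norm q < 1" "q \<noteq> 0" and n: "n \<ge> 1"
  shows "(1 - q ^ nat n) * Fam q (n-1) c e = Fam q n c e - Fam q n (\<lambda>i. c i + n - 6*i - e) e"
proof -
  have "(1 - q ^ nat n) * Fam q (n-1) c e = (\<Sum>\<^sub>\<infinity>i::int. (1 - q ^ nat n) * (q powi (c i) * qbinom q (n-1) (6*i + e)))"
    unfolding Fam_def by (rule infsum_cmult_right'[symmetric])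
  also have "\<dots> = (\<Sum>\<^sub>\<infinity>i::int. q powi (c i) * qbinom q n (6*i + e)
         - q powi (c i + n - 6*i - e) * qbinom q n (6*i + e))"
  proof (rule infsum_cong)
    fix i
    have "(1 - q ^ nat n) * (q powi (c i) * qbinom q (n-1) (6*i + e))
       = q powi (c i) * ((1 - q ^ nat n) * qbinom q (n-1) (6*i + e))" by simp
    also have "\<dots> = q powi (c i) * ((1 - q powi (n - (6*i+e))) * qbinom q n (6*i + e))"
      by (simp add: qbinom_P3[OF q(1) n])
    finally show "(1 - q ^ nat n) * (q powi (c i) * qbinom q (n-1) (6*i + e)) = q powi (c i) * qbinom q n (6*i + e)
         - q powi (c i + n - 6*i - e) * qbinom q n (6*i + e)"
      by (simp add: power_int_add power_int_diff q(2) algebra_simps)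
  qed
  also have "\<dots> = Fam q n c e - Fam q n (\<lambda>i. c i + n - 6*i - e) e"
    unfolding Fam_def by (rule infsum_diff') (rule fam_summable)+
  finally show ?thesis .
qed

lemma Fam_shift: "Fam q n c e = Fam q n (\<lambda>i. c (i+1)) (e+6)"
proof -
  have "Fam q n (\<lambda>i. c (i+1)) (e+6) = (\<Sum>\<^sub>\<infinity>i::int. (\<lambda>j. q powi (c j) * qbinom q n (6*j + e)) (i+1))"
    unfolding Fam_def by (simp add: algebra_simps)
  also have "\<dots> = Fam q n c e" unfolding Fam_def
    by (rule infsum_reindex_bij_betw) (rule bij_betwI[where g="\<lambda>i. i - 1"], auto)
  finally show ?thesis by simp
qed


lemma Fam_mult:
  assumes "q \<noteq> 0"
  shows "q powi k * Fam q n c e = Fam q n (\<lambda>i. c i + k) e"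
  unfolding Fam_def infsum_cmult_right'[symmetric]
  by (rule infsum_cong) (simp add: power_int_add assms)

definition Q0e :: "complex \<Rightarrow> int \<Rightarrow> complex" where "Q0e q m = Fam q (2*m) (\<lambda>i. 24*i^2 - 2*i) m - Fam q (2*m) (\<lambda>i. 24*i^2 + 34*i + 12) (m+4)"
definition Q0o :: "complex \<Rightarrow> int \<Rightarrow> complex" where "Q0o q m = Fam q (2*m+1) (\<lambda>i. 24*i^2 - 2*i) m - Fam q (2*m+1) (\<lambda>i. 24*i^2 + 34*i + 12) (m+5)"
definition Q1e :: "complex \<Rightarrow> int \<Rightarrow> complex" where "Q1e q m = Fam q (2*m) (\<lambda>i. 24*i^2 + 10*i + 1) (m+1) - Fam q (2*m) (\<lambda>i. 24*i^2 + 22*i + 5) (m+3)"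
definition Q1o :: "complex \<Rightarrow> int \<Rightarrow> complex" where "Q1o q m = Fam q (2*m+1) (\<lambda>i. 24*i^2 + 10*i + 1) (m+2) - Fam q (2*m+1) (\<lambda>i. 24*i^2 + 22*i + 5) (m+3)"
definition Ep :: "complex \<Rightarrow> int \<Rightarrow> complex" where "Ep q m = Fam q (2*m+1) (\<lambda>i. 24*i^2 + 4*i + m + 1) (m+1) - Fam q (2*m+1) (\<lambda>i. 24*i^2 + 28*i + m + 9) (m+4)"

context
  fixes q :: complex and m :: int
  assumes q: "norm q < 1" "q \<noteq> 0" and m: "m \<ge> 0"
begin

lemma n1: "2*m+1 \<ge> 1" "2*m+2 \<ge> 1" "2*m+3 \<ge> 1" using m by auto

lemma F1a: "Q0o q m = Q0e q m"
proof -
  have a: "Fam q (2*m+1) (\<lambda>i. 24*i^2 - 2*i) m = Fam q (2*m) (\<lambda>i. 24*i^2 - 2*i) m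
      + Fam q (2*m) (\<lambda>i. 24*i^2 - 2*i + (2*m+1) - 6*i - m) (m-1)"
    using Fam_P2[OF q n1(1)] by simp
  have b: "Fam q (2*m+1) (\<lambda>i. 24*i^2 + 34*i + 12) (m+5) = Fam q (2*m) (\<lambda>i. 24*i^2 + 34*i + 12) (m+4)
      + Fam q (2*m) (\<lambda>i. 24*i^2 + 34*i + 12 + 6*i + (m+5)) (m+5)"
    using Fam_P1[OF q n1(1)] by (simp add: algebra_simps)
  have c: "Fam q (2*m) (\<lambda>i. 24*i^2 - 2*i + (2*m+1) - 6*i - m) (m-1)
      = Fam q (2*m) (\<lambda>i. 24*i^2 + 34*i + 12 + 6*i + (m+5)) (m+5)"
  proof -
    have e: "m - 1 + 6 = m + 5" by simp
    show ?thesis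
      by (subst Fam_shift, unfold e) (rule Fam_cong, simp add: algebra_simps power2_eq_square)
  qed
  show ?thesis unfolding Q0o_def Q0e_def a b c by simp
qed

lemma F1b: "Q1o q m = Q1e q m"
proof -
  have a: "Fam q (2*m+1) (\<lambda>i. 24*i^2 + 10*i + 1) (m+2) = Fam q (2*m) (\<lambda>i. 24*i^2 + 10*i + 1) (m+1)
      + Fam q (2*m) (\<lambda>i. 24*i^2 + 10*i + 1 + 6*i + (m+2)) (m+2)"
    using Fam_P1[OF q n1(1)] by (simp add: algebra_simps)
  have b: "Fam q (2*m+1) (\<lambda>i. 24*i^2 + 22*i + 5) (m+3) = Fam q (2*m) (\<lambda>i. 24*i^2 + 22*i + 5) (m+3)
      + Fam q (2*m) (\<lambda>i. 24*i^2 + 22*i + 5 + (2*m+1) - 6*i - (m+3)) (m+2)"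
    using Fam_P2[OF q n1(1)] by (simp add: algebra_simps)
  have c: "Fam q (2*m) (\<lambda>i. 24*i^2 + 22*i + 5 + (2*m+1) - 6*i - (m+3)) (m+2)
      = Fam q (2*m) (\<lambda>i. 24*i^2 + 10*i + 1 + 6*i + (m+2)) (m+2)"
    by (rule Fam_cong, simp add: algebra_simps)
  show ?thesis unfolding Q1o_def Q1e_def a b c by simp
qed

lemma F2a: "Q0e q (m+1) = Q0o q m + Ep q m"
proof -
  have a: "Fam q (2*(m+1)) (\<lambda>i. 24*i^2 - 2*i) (m+1) = Fam q (2*m+1) (\<lambda>i. 24*i^2 - 2*i) m
      + Fam q (2*m+1) (\<lambda>i. 24*i^2 - 2*i + 6*i + (m+1)) (m+1)"
    using Fam_P1[OF q n1(2), of "\<lambda>i. 24*i^2 - 2*i" "m+1"] by (simp add: algebra_simps)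
  have b: "Fam q (2*(m+1)) (\<lambda>i. 24*i^2 + 34*i + 12) (m+1+4) = Fam q (2*m+1) (\<lambda>i. 24*i^2 + 34*i + 12) (m+5)
      + Fam q (2*m+1) (\<lambda>i. 24*i^2 + 34*i + 12 + (2*m+2) - 6*i - (m+5)) (m+4)"
    using Fam_P2[OF q n1(2), of "\<lambda>i. 24*i^2 + 34*i + 12" "m+5"] by (simp add: algebra_simps)
  have c: "Fam q (2*m+1) (\<lambda>i. 24*i^2 - 2*i + 6*i + (m+1)) (m+1) = Fam q (2*m+1) (\<lambda>i. 24*i^2 + 4*i + m + 1) (m+1)"
    "Fam q (2*m+1) (\<lambda>i. 24*i^2 + 34*i + 12 + (2*m+2) - 6*i - (m+5)) (m+4) = Fam q (2*m+1) (\<lambda>i. 24*i^2 + 28*i + m + 9) (m+4)"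
    by (rule Fam_cong, simp add: algebra_simps)+
  show ?thesis unfolding Q0e_def[of q "m+1"] Q0o_def Ep_def a b c by simp
qed

lemma F2b: "Q1e q (m+1) = Q1o q m + Ep q m"
proof -
  have a: "Fam q (2*(m+1)) (\<lambda>i. 24*i^2 + 10*i + 1) (m+1+1) = Fam q (2*m+1) (\<lambda>i. 24*i^2 + 10*i + 1) (m+2)
      + Fam q (2*m+1) (\<lambda>i. 24*i^2 + 10*i + 1 + (2*m+2) - 6*i - (m+2)) (m+1)"
    using Fam_P2[OF q n1(2), of "\<lambda>i. 24*i^2 + 10*i + 1" "m+2"] by (simp add: algebra_simps)
  have b: "Fam q (2*(m+1)) (\<lambda>i. 24*i^2 + 22*i + 5) (m+1+3) = Fam q (2*m+1) (\<lambda>i. 24*i^2 + 22*i + 5) (m+3)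
      + Fam q (2*m+1) (\<lambda>i. 24*i^2 + 22*i + 5 + 6*i + (m+4)) (m+4)"
    using Fam_P1[OF q n1(2), of "\<lambda>i. 24*i^2 + 22*i + 5" "m+4"] by (simp add: algebra_simps)
  have c: "Fam q (2*m+1) (\<lambda>i. 24*i^2 + 10*i + 1 + (2*m+2) - 6*i - (m+2)) (m+1) = Fam q (2*m+1) (\<lambda>i. 24*i^2 + 4*i + m + 1) (m+1)"
    "Fam q (2*m+1) (\<lambda>i. 24*i^2 + 22*i + 5 + 6*i + (m+4)) (m+4) = Fam q (2*m+1) (\<lambda>i. 24*i^2 + 28*i + m + 9) (m+4)"
    by (rule Fam_cong, simp add: algebra_simps)+
  show ?thesis unfolding Q1e_def[of q "m+1"] Q1o_def Ep_def a b c by simp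
qed

lemma F3: "Ep q (m+1) = q * (1 - q powi (2*m+2)) * Ep q m + q powi (2*m+3) * (Q0e q (m+1) + Q1e q (m+1))"
proof -
  define X1 where "X1 = (\<lambda>i::int. 24*i^2 + 4*i + (m+1) + 1)"
  define X2 where "X2 = (\<lambda>i::int. 24*i^2 + 28*i + (m+1) + 9)"
  define Y1 where "Y1 = (\<lambda>i::int. 24*i^2 + 4*i + m + 1)"
  define Y2 where "Y2 = (\<lambda>i::int. 24*i^2 + 28*i + m + 9)"
  have E1: "Ep q (m+1) = Fam q (2*m+3) X1 (m+2) - Fam q (2*m+3) X2 (m+5)"
    unfolding Ep_def X1_def X2_def by (simp add: algebra_simps)
  have E0: "Ep q m = Fam q (2*m+1) Y1 (m+1) - Fam q (2*m+1) Y2 (m+4)"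
    unfolding Ep_def Y1_def Y2_def by simp
  have a: "Fam q (2*m+3) X1 (m+2) = Fam q (2*m+2) X1 (m+1) + Fam q (2*m+2) (\<lambda>i. X1 i + 6*i + (m+2)) (m+2)"
    using Fam_P1[OF q n1(3), of X1 "m+2"] by (simp add: algebra_simps)
  have b: "Fam q (2*m+3) X2 (m+5) = Fam q (2*m+2) X2 (m+4) + Fam q (2*m+2) (\<lambda>i. X2 i + 6*i + (m+5)) (m+5)"
    using Fam_P1[OF q n1(3), of X2 "m+5"] by (simp add: algebra_simps)
  have qq: "q ^ nat (2*m+2) = q powi (2*m+2)" using m by (simp add: power_int_def)
  have c: "(1 - q powi (2*m+2)) * Fam q (2*m+1) Y1 (m+1) = Fam q (2*m+2) Y1 (m+1) - Fam q (2*m+2) (\<lambda>i. Y1 i + (2*m+2) - 6*i - (m+1)) (m+1)"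
    using Fam_P3[OF q n1(2), of Y1 "m+1"] qq by (simp add: algebra_simps)
  have d: "(1 - q powi (2*m+2)) * Fam q (2*m+1) Y2 (m+4) = Fam q (2*m+2) Y2 (m+4) - Fam q (2*m+2) (\<lambda>i. Y2 i + (2*m+2) - 6*i - (m+4)) (m+4)"
    using Fam_P3[OF q n1(2), of Y2 "m+4"] qq by (simp add: algebra_simps)
  have q1: "q = q powi 1" by simp
  have lhs: "q * (1 - q powi (2*m+2)) * Ep q m =
     Fam q (2*m+2) (\<lambda>i. Y1 i + 1) (m+1) - Fam q (2*m+2) (\<lambda>i. Y1 i + (2*m+2) - 6*i - (m+1) + 1) (m+1)
     - (Fam q (2*m+2) (\<lambda>i. Y2 i + 1) (m+4) - Fam q (2*m+2) (\<lambda>i. Y2 i + (2*m+2) - 6*i - (m+4) + 1) (m+4))"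
  proof -
    have "q * (1 - q powi (2*m+2)) * Ep q m = q powi 1 * ((1 - q powi (2*m+2)) * Fam q (2*m+1) Y1 (m+1))
        - q powi 1 * ((1 - q powi (2*m+2)) * Fam q (2*m+1) Y2 (m+4))"
      unfolding E0 by (simp add: algebra_simps)
    also have "\<dots> = Fam q (2*m+2) (\<lambda>i. Y1 i + 1) (m+1) - Fam q (2*m+2) (\<lambda>i. Y1 i + (2*m+2) - 6*i - (m+1) + 1) (m+1)
     - (Fam q (2*m+2) (\<lambda>i. Y2 i + 1) (m+4) - Fam q (2*m+2) (\<lambda>i. Y2 i + (2*m+2) - 6*i - (m+4) + 1) (m+4))"
      unfolding c d right_diff_distrib Fam_mult[OF q(2)] by simp
    finally show ?thesis .
  qed
  have rhs: "q powi (2*m+3) * (Q0e q (m+1) + Q1e q (m+1)) =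
      Fam q (2*m+2) (\<lambda>i. 24*i^2 - 2*i + (2*m+3)) (m+1) - Fam q (2*m+2) (\<lambda>i. 24*i^2 + 34*i + 12 + (2*m+3)) (m+5)
    + (Fam q (2*m+2) (\<lambda>i. 24*i^2 + 10*i + 1 + (2*m+3)) (m+2) - Fam q (2*m+2) (\<lambda>i. 24*i^2 + 22*i + 5 + (2*m+3)) (m+4))"
    unfolding Q0e_def Q1e_def distrib_left right_diff_distrib Fam_mult[OF q(2)] by (simp add: algebra_simps)
  have e1: "Fam q (2*m+2) (\<lambda>i. Y1 i + 1) (m+1) = Fam q (2*m+2) X1 (m+1)"
    "Fam q (2*m+2) (\<lambda>i. Y2 i + 1) (m+4) = Fam q (2*m+2) X2 (m+4)"
    by (rule Fam_cong, simp add: X1_def Y1_def X2_def Y2_def)+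
  have e2a: "Fam q (2*m+2) (\<lambda>i. X1 i + 6*i + (m+2)) (m+2) = Fam q (2*m+2) (\<lambda>i. 24*i^2 + 10*i + 1 + (2*m+3)) (m+2)"
    by (rule Fam_cong) (simp add: X1_def algebra_simps)
  have e2b: "Fam q (2*m+2) (\<lambda>i. X2 i + 6*i + (m+5)) (m+5) = Fam q (2*m+2) (\<lambda>i. 24*i^2 + 34*i + 12 + (2*m+3)) (m+5)"
    by (rule Fam_cong) (simp add: X2_def algebra_simps)
  have e2c: "Fam q (2*m+2) (\<lambda>i. Y1 i + (2*m+2) - 6*i - (m+1) + 1) (m+1) = Fam q (2*m+2) (\<lambda>i. 24*i^2 - 2*i + (2*m+3)) (m+1)"
    by (rule Fam_cong) (simp add: Y1_def algebra_simps)
  have e2d: "Fam q (2*m+2) (\<lambda>i. Y2 i + (2*m+2) - 6*i - (m+4) + 1) (m+4) = Fam q (2*m+2) (\<lambda>i. 24*i^2 + 22*i + 5 + (2*m+3)) (m+4)"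
    by (rule Fam_cong) (simp add: Y2_def algebra_simps)
  show ?thesis unfolding E1 a b lhs rhs e1 e2a e2b e2c e2d by simp
qed

end


abbreviation "iq \<equiv> inv_qfac"

lemma iq_nat: "inv_qfac q (int n) = 1 / qpoch q q n" by (simp add: inv_qfac_def)
lemma iq_neg: "n < 0 \<Longrightarrow> inv_qfac q n = 0" by (simp add: inv_qfac_def)
lemma iq_Suc: assumes "norm q < 1"
  shows "inv_qfac q (int n) = (1 - q ^ Suc n) * inv_qfac q (int (Suc n))"
proof -
  have "qpoch q q n \<noteq> 0" "1 - q^Suc n \<noteq> 0" using qpoch_nz[OF assms] one_minus_qpow_nz[OF assms, of "Suc n"] by auto
  thus ?thesis unfolding iq_nat qpoch_Suc by (simp del: of_nat_Suc)
qed

lemma iq_pascal: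
  assumes q: "norm q < 1"
  shows "(1 - q ^ Suc n) * (iq q (int i) * iq q (int (Suc n) - int i))
       = iq q (int i - 1) * iq q (int (Suc n) - int i) + q ^ i * (iq q (int i) * iq q (int n - int i))"
proof -
  consider "i = 0" | "i = Suc n" | "i > Suc n" | j where "i = Suc j" "j < n" by (metis linorder_neqE_nat not0_implies_Suc less_Suc_eq)
  then show ?thesis
  proof cases
    case 1 thus ?thesis using iq_Suc[OF q, of n] by (simp add: iq_neg)
  next
    case 2 thus ?thesis using iq_Suc[OF q, of n] by (simp add: iq_neg)
  next
    case 3 thus ?thesis by (simp add: iq_neg)
  next
    case 4
    obtain d where d: "n = Suc (j + d)" using 4 by (metis add_Suc_right less_iff_Suc_add)
    have e1: "int i - 1 = int j" "int (Suc n) - int i = int (Suc d)" "int n - int i = int d"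
      using 4 d by auto
    have e1: "int (Suc j) - 1 = int j" "int (Suc n) - int (Suc j) = int (Suc d)" "int n - int (Suc j) = int d"
      using 4 d by auto
    define a where "a = qpoch q q j"
    define b where "b = qpoch q q d"
    define X where "X = 1 - q ^ Suc j"
    define Y where "Y = 1 - q ^ Suc d"
    define z where "z = q ^ Suc j"
    have nz: "a \<noteq> 0" "b \<noteq> 0" "X \<noteq> 0" "Y \<noteq> 0"
      using qpoch_nz[OF q] one_minus_qpow_nz[OF q, of "Suc j"] one_minus_qpow_nz[OF q, of "Suc d"]
      by (auto simp: a_def b_def X_def Y_def)
    have key: "1 - q ^ Suc n = X + z * Y"
    proof -
      have "q ^ Suc j * q ^ Suc d = q ^ Suc n" using d by (simp flip: power_add)
      thus ?thesis by (simp add: X_def Y_def z_def algebra_simps)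
    qed
    have P: "qpoch q q (Suc j) = a * X" "qpoch q q (Suc d) = b * Y"
      by (simp_all add: qpoch_Suc a_def b_def X_def Y_def)
    have "(X + z*Y) * (1 / (a*X) * (1 / (b*Y))) = 1/a * (1/(b*Y)) + z * (1/(a*X) * (1/b))"
      using nz by (simp add: field_simps)
    thus ?thesis unfolding 4 e1 key iq_nat P by (simp add: z_def a_def b_def del: of_nat_Suc)
  qed
qed


lemma iq0[simp]: "iq q 0 = 1" by (simp add: inv_qfac_def)

lemma Kcore:
  assumes q: "norm q < 1"
  shows "(\<Sum>i=0..p. q^(i^2+i*L) * (iq q (int i) * iq q (int p - int i)) * iq q (int (i+L)))
         = iq q (int p) * iq q (int (p+L))"
proof (induction p arbitrary: L)
  case 0 thus ?case by simp
next
  case (Suc p)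
  define f where "f = (\<lambda>i. q^(i^2+i*L) * iq q (int (i+L)))"
  define g where "g = (\<lambda>i. q^(i^2+i*Suc L) * iq q (int (i+Suc L)) * (iq q (int i) * iq q (int p - int i)))"
  have A: "(\<Sum>i=0..Suc p. f i * (iq q (int i - 1) * iq q (int (Suc p) - int i)))
       = (\<Sum>t=0..p. g t * q^(t+L+1))"
  proof -
    have "(\<Sum>i=0..Suc p. f i * (iq q (int i - 1) * iq q (int (Suc p) - int i)))
        = (\<Sum>t=0..p. f (Suc t) * (iq q (int t) * iq q (int p - int t)))"
      by (subst sum.atLeast0_atMost_Suc_shift) (simp add: iq_neg)
    also have "\<dots> = (\<Sum>t=0..p. g t * q^(t+L+1))"
    proof (rule sum.cong[OF refl])
      fix t
      have "q^((Suc t)^2 + Suc t * L) = q^(t^2+t*Suc L) * q^(t+L+1)"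
        by (simp add: power_add[symmetric] power2_eq_square algebra_simps)
      thus "f (Suc t) * (iq q (int t) * iq q (int p - int t)) = g t * q^(t+L+1)"
        by (simp add: f_def g_def algebra_simps)
    qed
    finally show ?thesis .
  qed
  have B: "(\<Sum>i=0..Suc p. f i * (q^i * (iq q (int i) * iq q (int p - int i))))
       = (\<Sum>i=0..p. q^(i^2+i*Suc L) * (iq q (int i) * iq q (int p - int i)) * iq q (int (i+Suc L)))
         - (\<Sum>t=0..p. g t * q^(t+L+1))"
  proof -
    have "(\<Sum>i=0..Suc p. f i * (q^i * (iq q (int i) * iq q (int p - int i))))
        = (\<Sum>i=0..p. f i * (q^i * (iq q (int i) * iq q (int p - int i))))"
      by (subst sum.atLeast0_atMost_Suc) (simp add: iq_neg)
    also have "\<dots> = (\<Sum>i=0..p. q^(i^2+i*Suc L) * (iq q (int i) * iq q (int p - int i)) * iq q (int (i+Suc L))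
           - g i * q^(i+L+1))"
    proof (rule sum.cong[OF refl])
      fix i
      have "iq q (int (i+L)) = (1 - q ^ Suc (i+L)) * iq q (int (Suc (i+L)))" by (rule iq_Suc[OF q])
      hence e: "iq q (int (i+L)) = iq q (int (i + Suc L)) - q^(i+L+1) * iq q (int (i+Suc L))"
        by (simp add: algebra_simps)
      have e2: "q^(i^2+i*Suc L) = q^(i^2+i*L) * q^i" by (simp add: power_add[symmetric] algebra_simps)
      show "f i * (q^i * (iq q (int i) * iq q (int p - int i))) =
          q^(i^2+i*Suc L) * (iq q (int i) * iq q (int p - int i)) * iq q (int (i+Suc L)) - g i * q^(i+L+1)"
        unfolding f_def g_def e e2 by (simp add: algebra_simps)
    qed
    also have "\<dots> = (\<Sum>i=0..p. q^(i^2+i*Suc L) * (iq q (int i) * iq q (int p - int i)) * iq q (int (i+Suc L)))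
         - (\<Sum>t=0..p. g t * q^(t+L+1))" by (rule sum_subtractf)
    finally show ?thesis .
  qed
  have main: "(1 - q^Suc p) * (\<Sum>i=0..Suc p. q^(i^2+i*L) * (iq q (int i) * iq q (int (Suc p) - int i)) * iq q (int (i+L)))
      = (\<Sum>i=0..p. q^(i^2+i*Suc L) * (iq q (int i) * iq q (int p - int i)) * iq q (int (i+Suc L)))"
  proof -
    have "(1 - q^Suc p) * (\<Sum>i=0..Suc p. q^(i^2+i*L) * (iq q (int i) * iq q (int (Suc p) - int i)) * iq q (int (i+L)))
       = (\<Sum>i=0..Suc p. f i * ((1 - q^Suc p) * (iq q (int i) * iq q (int (Suc p) - int i))))"
      by (simp add: sum_distrib_left f_def algebra_simps)
    also have "\<dots> = (\<Sum>i=0..Suc p. f i * (iq q (int i - 1) * iq q (int (Suc p) - int i))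
         + f i * (q^i * (iq q (int i) * iq q (int p - int i))))"
      by (intro sum.cong refl) (simp only: iq_pascal[OF q] distrib_left)
    also have "\<dots> = (\<Sum>i=0..p. q^(i^2+i*Suc L) * (iq q (int i) * iq q (int p - int i)) * iq q (int (i+Suc L)))"
      unfolding sum.distrib A B by simp
    finally show ?thesis .
  qed
  have nz: "1 - q^Suc p \<noteq> 0" using one_minus_qpow_nz[OF q, of "Suc p"] by simp
  have "iq q (int p) = (1 - q^Suc p) * iq q (int (Suc p))" by (rule iq_Suc[OF q])
  hence "(1 - q^Suc p) * (\<Sum>i=0..Suc p. q^(i^2+i*L) * (iq q (int i) * iq q (int (Suc p) - int i)) * iq q (int (i+L)))
      = (1 - q^Suc p) * (iq q (int (Suc p)) * iq q (int (Suc p + L)))"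
  proof -
    have h2: "int (p + Suc L) = int (Suc p + L)" by simp
    show ?thesis unfolding main Suc.IH h2 \<open>iq q (int p) = _\<close> by (simp only: mult.assoc)
  qed
  thus ?case using nz by simp
qed


definition H :: "complex \<Rightarrow> nat \<Rightarrow> int \<Rightarrow> complex" where
  "H q X r = iq q (int X - r) * iq q (int X + r)"

lemma H_abs: "H q X r = H q X \<bar>r\<bar>"
  by (cases "r \<ge> 0") (auto simp: H_def)

lemma H_zero: "int X < \<bar>r\<bar> \<Longrightarrow> H q X r = 0"
  by (cases "r \<ge> 0") (auto simp: H_def iq_neg)

lemma Key_nat:
  assumes q: "norm q < 1"
  shows "(\<Sum>N=0..X. q^(N^2) * iq q (int X - int N) * H q N (int R)) = q^(R^2) * H q X (int R)"
proof (cases "X < R")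
  case True
  have "(\<Sum>N=0..X. q^(N^2) * iq q (int X - int N) * H q N (int R)) = 0"
    by (rule sum.neutral) (use True in \<open>auto simp: H_zero\<close>)
  thus ?thesis using True by (simp add: H_zero)
next
  case False
  then obtain p where X: "X = R + p" by (metis le_Suc_ex linorder_not_le)
  have "{0..X} = {0..<R} \<union> {R..R+p}" using X by auto
  hence "(\<Sum>N=0..X. q^(N^2) * iq q (int X - int N) * H q N (int R))
      = (\<Sum>N\<in>{0..<R}. q^(N^2) * iq q (int X - int N) * H q N (int R))
        + (\<Sum>N=R..R+p. q^(N^2) * iq q (int X - int N) * H q N (int R))"
    by (simp add: sum.union_disjoint[of "{0..<R}" "{R..R+p}"] ivl_disj_int)
  also have "(\<Sum>N\<in>{0..<R}. q^(N^2) * iq q (int X - int N) * H q N (int R)) = 0"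
    by (rule sum.neutral) (auto simp: H_zero)
  also have "(\<Sum>N=R..R+p. q^(N^2) * iq q (int X - int N) * H q N (int R))
      = (\<Sum>i=0..p. q^((i+R)^2) * iq q (int X - int (i+R)) * H q (i+R) (int R))"
    using sum.shift_bounds_cl_nat_ivl[of "\<lambda>N. q^(N^2) * iq q (int X - int N) * H q N (int R)" 0 R p]
    by (simp add: add.commute)
  also have "\<dots> = q^(R^2) * (\<Sum>i=0..p. q^(i^2+i*(2*R)) * (iq q (int i) * iq q (int p - int i)) * iq q (int (i+2*R)))"
    unfolding sum_distrib_left
  proof (rule sum.cong[OF refl])
    fix i
    have "(i+R)^2 = R^2 + (i^2+i*(2*R))" by (simp add: power2_eq_square algebra_simps)
    hence "q^((i+R)^2) = q^(R^2) * q^(i^2+i*(2*R))" by (simp add: power_add)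
    moreover have "int X - int (i+R) = int p - int i" "int (i+R) - int R = int i" "int (i+R) + int R = int (i + 2*R)"
      using X by auto
    ultimately show "q^((i+R)^2) * iq q (int X - int (i+R)) * H q (i+R) (int R) =
          q^(R^2) * (q^(i^2+i*(2*R)) * (iq q (int i) * iq q (int p - int i)) * iq q (int (i+2*R)))"
      by (simp add: H_def algebra_simps)
  qed
  also have "\<dots> = q^(R^2) * (iq q (int p) * iq q (int (p+2*R)))" using Kcore[OF q, of "2*R" p] by (simp only:)
  also have "\<dots> = q^(R^2) * H q X (int R)"
  proof -
    have "int X - int R = int p" "int X + int R = int (p+2*R)" using X by auto
    thus ?thesis unfolding H_def by (simp only:)
  qed
  finally show ?thesis by simp
qed

lemma Key:
  assumes q: "norm q < 1"
  shows "(\<Sum>N=0..X. q^(N^2) * iq q (int X - int N) * H q N r) = q^(nat \<bar>r\<bar> ^ 2) * H q X r"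
proof -
  have "H q N r = H q N (int (nat \<bar>r\<bar>))" for N using H_abs[of q N r] by simp
  moreover have "H q X r = H q X (int (nat \<bar>r\<bar>))" using H_abs[of q X r] by simp
  ultimately show ?thesis using Key_nat[OF q, of X "nat \<bar>r\<bar>"] by simp
qed


definition GG :: "complex \<Rightarrow> nat \<Rightarrow> complex" where "GG q n = qpoch (q^2) (q^2) n"

lemma GG_Suc: "GG q (Suc n) = GG q n * (1 - q^(2*n+2))"
  by (simp add: GG_def qpoch_Suc power_mult[symmetric] power_add[symmetric] algebra_simps)

lemma GG_nz: "norm q < 1 \<Longrightarrow> GG q n \<noteq> 0" by (simp add: GG_def qpoch2_nz)

definition ell :: "complex \<Rightarrow> nat \<Rightarrow> nat \<Rightarrow> complex" where
  "ell q a m = (\<Sum>s=0..m. (if s mod 2 = a then q^(s^2) / GG q s * iq q (int m - int s) else 0))"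

lemma ell_ext:
  assumes "m \<le> B"
  shows "ell q a m = (\<Sum>s=0..B. (if s mod 2 = a then q^(s^2) / GG q s * iq q (int m - int s) else 0))"
  unfolding ell_def
  by (rule sum.mono_neutral_left) (use assms in \<open>auto simp: iq_neg\<close>)

lemma Jn:
  assumes q: "norm q < 1"
  shows "iq q (int n) - (1+q) * iq q (int n - 1) + q * iq q (int n - 2) = q^(2*n) * iq q (int n)"
proof -
  consider "n = 0" | "n = 1" | k where "n = k + 2" by (metis add_2_eq_Suc' not0_implies_Suc One_nat_def)
  then show ?thesis
  proof cases
    case 1 thus ?thesis by (simp add: iq_neg)
  next
    case 2
    have nz: "1 - q \<noteq> 0" using one_minus_qpow_nz[OF q, of 1] by simp
    have i1: "iq q 1 = 1/(1-q)" by (simp add: inv_qfac_def qpoch_def)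
    have "1/(1-q) - (1+q) = q^2 / (1-q)" using nz by (simp add: field_simps power2_eq_square algebra_simps)
    thus ?thesis using 2 by (simp add: iq_neg i1)
  next
    case 3
    have a: "iq q (int (Suc k)) = (1 - q ^ Suc (Suc k)) * iq q (int (Suc (Suc k)))" by (rule iq_Suc[OF q])
    have b: "iq q (int k) = (1 - q ^ Suc k) * iq q (int (Suc k))" by (rule iq_Suc[OF q])
    have e: "int n - 1 = int (Suc k)" "int n - 2 = int k" "n = Suc (Suc k)" using 3 by auto
    define y where "y = q ^ Suc k"
    have y2a: "q ^ Suc (Suc k) = q * y" by (simp add: y_def)
    have "y^2 = q^(Suc k * 2)" unfolding y_def by (rule power_mult[symmetric])
    hence "q^2 * y^2 = q^2 * q^(Suc k * 2)" by simp
    also have "\<dots> = q^(2 + Suc k * 2)" by (simp only: power_add)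
    also have "2 + Suc k * 2 = 2 * Suc (Suc k)" by simp
    finally have y2b: "q^(2 * Suc (Suc k)) = q^2 * y^2" by simp
    note y2 = y2a y2b
    have alg: "\<And>X::complex. X - (1+q) * ((1 - q*y) * X) + q * ((1-y) * ((1 - q*y) * X)) = q^2*y^2 * X"
      by (simp add: algebra_simps power2_eq_square)
    show ?thesis unfolding e(1,2) b a unfolding e(3) y2 y_def[symmetric] by (rule alg)
  qed
qed

lemma ell_rec:
  assumes q: "norm q < 1" and a: "a \<le> 1"
  shows "(1 - q^(2*m+4)) * ell q a (m+2) - (1+q) * ell q a (m+1) + q * ell q a m
         = q^(2*m+3) * ell q (1-a) (m+1)"
proof -
  define c where "c = (\<lambda>s. if s mod 2 = a then q^(s^2) / GG q s else 0)"
  have e0: "ell q a m' = (\<Sum>s=0..m+2. c s * iq q (int m' - int s))" if "m' \<le> m+2" for m'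
    unfolding ell_ext[OF that] c_def by (rule sum.cong) auto
  have "(1 - q^(2*m+4)) * ell q a (m+2) - (1+q) * ell q a (m+1) + q * ell q a m
      = (\<Sum>s=0..m+2. c s * ((1 - q^(2*m+4)) * iq q (int (m+2) - int s) - (1+q) * iq q (int (m+1) - int s)
            + q * iq q (int m - int s)))"
  proof -
    have e2: "ell q a (m+2) = (\<Sum>s=0..m+2. c s * iq q (int (m+2) - int s))" by (rule e0) simp
    have e1: "ell q a (m+1) = (\<Sum>s=0..m+2. c s * iq q (int (m+1) - int s))" by (rule e0) simp
    have e00: "ell q a m = (\<Sum>s=0..m+2. c s * iq q (int m - int s))" by (rule e0) simp
    show ?thesis unfolding e2 e1 e00 sum_distrib_left sum_subtractf[symmetric] sum.distrib[symmetric]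
      by (rule sum.cong) (simp_all add: algebra_simps)
  qed
  also have "\<dots> = (\<Sum>s=0..m+2. c s * ((q^(2*(m+2-s)) - q^(2*m+4)) * iq q (int (m+2-s))))"
  proof (rule sum.cong[OF refl])
    fix s assume "s \<in> {0..m+2}"
    hence s: "s \<le> m+2" by simp
    have J: "iq q (int (m+2-s)) - (1+q) * iq q (int (m+2-s) - 1) + q * iq q (int (m+2-s) - 2)
          = q^(2*(m+2-s)) * iq q (int (m+2-s))" by (rule Jn[OF q])
    have e: "int (m+2-s) = int (m+2) - int s" "int (m+2-s) - 1 = int (m+1) - int s" "int (m+2-s) - 2 = int m - int s"
      using s by auto
    show "c s * ((1 - q^(2*m+4)) * iq q (int (m+2) - int s) - (1+q) * iq q (int (m+1) - int s)
            + q * iq q (int m - int s)) = c s * ((q^(2*(m+2-s)) - q^(2*m+4)) * iq q (int (m+2-s)))"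
      using J unfolding e by (simp add: algebra_simps)
  qed
  also have "\<dots> = (\<Sum>t=0..m+1. c (Suc t) * ((q^(2*(m+1-t)) - q^(2*m+4)) * iq q (int (m+1-t))))"
  proof -
    have eqr: "{0..m+2} = {0..Suc (m+1)}" by simp
    have "2*(m+2-0) = 2*m+4" by simp
    hence z: "q^(2*(m+2-0)) - q^(2*m+4) = 0" by (simp only: diff_self)
    show ?thesis unfolding eqr sum.atLeast0_atMost_Suc_shift z by simp
  qed
  also have "\<dots> = (\<Sum>t=0..m+1. q^(2*m+3) * ((if t mod 2 = 1 - a then q^(t^2) / GG q t else 0) * iq q (int (m+1) - int t)))"
  proof (rule sum.cong[OF refl])
    fix t assume "t \<in> {0..m+1}"
    hence t: "t \<le> m+1" by simp
    have par: "(Suc t mod 2 = a) = (t mod 2 = 1 - a)" using a by presburger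
    have p1: "q^((Suc t)^2) * q^(2*(m+1-t)) = q^(2*m+3) * q^(t^2)"
    proof -
      have "(Suc t)^2 + 2*(m+1-t) = 2*m+3 + t^2" using t by (simp add: power2_eq_square algebra_simps)
      thus ?thesis by (simp flip: power_add)
    qed
    have p2: "q^((Suc t)^2) * q^(2*m+4) = q^(2*m+3) * q^(t^2) * q^(2*t+2)"
    proof -
      have "(Suc t)^2 + (2*m+4) = 2*m+3 + t^2 + (2*t+2)" by (simp add: power2_eq_square algebra_simps)
      thus ?thesis by (simp only: power_add[symmetric])
    qed
    have g: "GG q (Suc t) = GG q t * (1 - q^(2*t+2))" by (rule GG_Suc)
    have nz: "GG q t \<noteq> 0" "1 - q^(2*t+2) \<noteq> 0" using GG_nz[OF q] one_minus_qpow_nz[OF q, of "2*t+2"] by auto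
    have e: "int (m+1-t) = int (m+1) - int t" using t by auto
    show "c (Suc t) * ((q^(2*(m+1-t)) - q^(2*m+4)) * iq q (int (m+1-t))) =
        q^(2*m+3) * ((if t mod 2 = 1 - a then q^(t^2) / GG q t else 0) * iq q (int (m+1) - int t))"
    proof (cases "t mod 2 = 1 - a")
      case True
      have "c (Suc t) * ((q^(2*(m+1-t)) - q^(2*m+4)) * iq q (int (m+1-t)))
          = (q^((Suc t)^2) * q^(2*(m+1-t)) - q^((Suc t)^2) * q^(2*m+4)) / GG q (Suc t) * iq q (int (m+1-t))"
      proof -
        have "c (Suc t) = q^((Suc t)^2) / GG q (Suc t)" using True par by (simp add: c_def)
        moreover have "\<And>a G x y I::complex. a/G * ((x - y) * I) = (a*x - a*y)/G * I"
          by (case_tac "G = 0") (simp_all add: field_simps)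
        ultimately show ?thesis by simp
      qed
      also have "\<dots> = q^(2*m+3) * q^(t^2) * (1 - q^(2*t+2)) / (GG q t * (1 - q^(2*t+2))) * iq q (int (m+1-t))"
        unfolding p1 p2 g by (simp add: algebra_simps)
      also have "\<dots> = q^(2*m+3) * (q^(t^2) / GG q t * iq q (int (m+1) - int t))"
        using nz unfolding e by simp
      finally show ?thesis using True by simp
    next
      case False thus ?thesis using par by (simp add: c_def)
    qed
  qed
  also have "\<dots> = q^(2*m+3) * ell q (1-a) (m+1)"
    unfolding ell_def sum_distrib_left by (rule sum.cong) auto
  finally show ?thesis .
qed

definition Lq :: "complex \<Rightarrow> nat \<Rightarrow> nat \<Rightarrow> complex" where "Lq q a m = GG q m * ell q a m"

lemma Lq_rec:
  assumes q: "norm q < 1" and a: "a \<le> 1"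
  shows "Lq q a (m+2) = (1+q) * Lq q a (m+1) - q * (1 - q^(2*m+2)) * Lq q a m + q^(2*m+3) * Lq q (1-a) (m+1)"
proof -
  have g2: "GG q (m+2) = GG q (m+1) * (1 - q^(2*m+4))"
  proof -
    have "GG q (Suc (m+1)) = GG q (m+1) * (1 - q^(2*(m+1)+2))" by (rule GG_Suc)
    moreover have "2*(m+1)+2 = 2*m+4" "Suc (m+1) = m+2" by simp_all
    ultimately show ?thesis by metis
  qed
  have g1: "GG q (m+1) = GG q m * (1 - q^(2*m+2))" using GG_Suc[of q m] by simp
  have "Lq q a (m+2) = GG q (m+1) * ((1 - q^(2*m+4)) * ell q a (m+2))"
    unfolding Lq_def g2 by simp
  also have "(1 - q^(2*m+4)) * ell q a (m+2) = (1+q) * ell q a (m+1) - q * ell q a m + q^(2*m+3) * ell q (1-a) (m+1)"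
    using ell_rec[OF q a, of m] by (simp add: algebra_simps)
  finally show ?thesis unfolding Lq_def g1 by (simp add: algebra_simps)
qed


lemma Fam_single:
  assumes "\<And>i. i \<noteq> i0 \<Longrightarrow> q powi (c i) * qbinom q n (6*i+e) = 0"
  shows "Fam q n c e = q powi (c i0) * qbinom q n (6*i0+e)"
  unfolding Fam_def by (subst fsupp_infsum[of "{i0}"]) (use assms in auto)

lemma Fam_zero:
  assumes "\<And>i. q powi (c i) * qbinom q n (6*i+e) = 0"
  shows "Fam q n c e = 0"
  unfolding Fam_def by (subst fsupp_infsum[of "{}"]) (use assms in auto)

lemma qbinom_out: "B < 0 \<or> B > T \<Longrightarrow> qbinom q T B = 0"
  by (auto simp: qbinom_def)

definition R :: "complex \<Rightarrow> nat \<Rightarrow> int \<Rightarrow> complex" where "R q a m = (if a = 0 then Q0e q m else Q1e q m)"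

lemma Fam_zero':
  assumes "\<And>i. 6*i+e < 0 \<or> 6*i+e > n"
  shows "Fam q n c e = 0"
  by (rule Fam_zero) (simp add: qbinom_out[OF assms])

lemma Fam_single':
  assumes "\<And>i. i \<noteq> i0 \<Longrightarrow> 6*i+e < 0 \<or> 6*i+e > n"
  shows "Fam q n c e = q powi (c i0) * qbinom q n (6*i0+e)"
  by (rule Fam_single) (simp add: qbinom_out[OF assms])

lemma R_rec:
  assumes q: "norm q < 1" "q \<noteq> 0" and m: "m \<ge> 0" and a: "a \<le> (1::nat)"
  shows "R q a (m+2) = (1+q) * R q a (m+1) - q * (1 - q powi (2*m+2)) * R q a m
          + q powi (2*m+3) * R q (1-a) (m+1)"
proof -
  have m1: "m+1 \<ge> 0" using m by simp
  have s0: "R q a (m+1) = R q a m + Ep q m" for a :: nat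
    using F1a[OF q m] F1b[OF q m] F2a[OF q m] F2b[OF q m] by (simp add: R_def)
  have s1: "R q a (m+2) = R q a (m+1) + Ep q (m+1)"
    using F1a[OF q m1] F1b[OF q m1] F2a[OF q m1] F2b[OF q m1] by (simp add: R_def add.assoc)
  have f3: "Ep q (m+1) = q * (1 - q powi (2*m+2)) * Ep q m + q powi (2*m+3) * (R q a (m+1) + R q (1-a) (m+1))"
    using F3[OF q m] a by (cases a) (auto simp: R_def)
  have qq: "q * q powi (2*m+2) = q powi (2*m+3)"
  proof -
    have "q powi (2*m+2+1) = q powi (2*m+2) * q powi 1" using q(2) by (rule power_int_add[OF disjI1])
    thus ?thesis by (simp add: add.assoc)
  qed
  have "R q a (m+2) = R q a (m+1) + q * (1 - q powi (2*m+2)) * (R q a (m+1) - R q a m)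
        + q powi (2*m+3) * (R q a (m+1) + R q (1-a) (m+1))"
    unfolding s1 f3 using s0[of a] by simp
  thus ?thesis unfolding qq[symmetric] by (simp add: algebra_simps)
qed

lemma qbinom_2_1: assumes "norm q < 1" shows "qbinom q 2 1 = 1 + q"
proof -
  have nz: "1 - q \<noteq> 0" using one_minus_qpow_nz[OF assms, of 1] by simp
  have "qbinom q 2 1 = qpoch q q 2 / (qpoch q q 1 * qpoch q q 1)" by (simp add: qbinom_def)
  also have "qpoch q q 2 = (1 - q) * (1 - q^2)" by (simp add: qpoch_def numeral_2_eq_2)
  also have "qpoch q q 1 = 1 - q" by (simp add: qpoch_def)
  also have "(1 - q) * (1 - q^2) / ((1 - q) * (1 - q)) = (1 - q^2) / (1 - q)" using nz by simp
  also have "(1 - q^2) = (1 - q) * (1 + q)" by (simp add: power2_eq_square algebra_simps)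
  finally show ?thesis using nz by simp
qed

lemma base_nonzero_q:
  assumes q: "norm q < 1" "q \<noteq> 0"
  shows "Lq q 0 m = R q 0 (int m) \<and> Lq q 1 m = R q 1 (int m)"
proof -
  have b0: "Lq q 0 0 = R q 0 0 \<and> Lq q 1 0 = R q 1 0"
  proof -
    have "Lq q 0 0 = 1" "Lq q 1 0 = 0" by (simp_all add: Lq_def ell_def GG_def)
    moreover have "Fam q 0 (\<lambda>i. 24*i^2 - 2*i) 0 = 1"
      by (subst Fam_single'[of 0]) (auto simp: qbinom_def)
    moreover have "Fam q 0 (\<lambda>i. 24*i^2 + 34*i + 12) 4 = 0"
      by (rule Fam_zero') presburger
    moreover have "Fam q 0 (\<lambda>i. 24*i^2 + 10*i + 1) 1 = 0"
      by (rule Fam_zero') presburger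
    moreover have "Fam q 0 (\<lambda>i. 24*i^2 + 22*i + 5) 3 = 0"
      by (rule Fam_zero') presburger
    ultimately show ?thesis by (simp add: R_def Q0e_def Q1e_def)
  qed
  have b1: "Lq q 0 1 = R q 0 1 \<and> Lq q 1 1 = R q 1 1"
  proof -
    have nz: "1 - q \<noteq> 0" using one_minus_qpow_nz[OF q(1), of 1] by simp
    have i1: "iq q 1 = 1/(1-q)" by (simp add: inv_qfac_def qpoch_def)
    have "GG q 1 = 1 - q^2" by (simp add: GG_def qpoch_def)
    hence "Lq q 0 1 = (1 - q^2) / (1 - q)" "Lq q 1 1 = q"
      using GG_nz[OF q(1), of 1] by (simp_all add: Lq_def ell_def GG_def qpoch_def iq_nat i1)
    moreover have "(1 - q^2) / (1 - q) = 1 + q" using nz by (simp add: field_simps power2_eq_square algebra_simps)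
    moreover have "Fam q 2 (\<lambda>i. 24*i^2 - 2*i) 1 = 1 + q"
      by (subst Fam_single'[of 0]) (presburger, simp add: qbinom_2_1[OF q(1)])
    moreover have "Fam q 2 (\<lambda>i. 24*i^2 + 10*i + 1) 2 = q"
      by (subst Fam_single'[of 0]) (presburger, simp add: qbinom_def qpoch_nz[OF q(1)])
    moreover have "Fam q 2 (\<lambda>i. 24*i^2 + 34*i + 12) 5 = 0"
      by (rule Fam_zero') presburger
    moreover have "Fam q 2 (\<lambda>i. 24*i^2 + 22*i + 5) 4 = 0"
      by (rule Fam_zero') presburger
    ultimately show ?thesis by (simp add: R_def Q0e_def Q1e_def)
  qed
  have "\<forall>m. (Lq q 0 m = R q 0 (int m) \<and> Lq q 1 m = R q 1 (int m)) \<and>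
             (Lq q 0 (m+1) = R q 0 (int (m+1)) \<and> Lq q 1 (m+1) = R q 1 (int (m+1)))"
  proof
    fix m show "(Lq q 0 m = R q 0 (int m) \<and> Lq q 1 m = R q 1 (int m)) \<and>
             (Lq q 0 (m+1) = R q 0 (int (m+1)) \<and> Lq q 1 (m+1) = R q 1 (int (m+1)))"
    proof (induction m)
      case 0 thus ?case using b0 b1 by simp
    next
      case (Suc m)
      have e: "int (m+2) = int m + 2" "int (m+1) = int m + 1" by simp_all
      have pw: "q^(2*m+2) = q powi (2 * int m + 2)" "q^(2*m+3) = q powi (2 * int m + 3)"
        by (metis of_nat_add of_nat_mult of_nat_numeral power_int_of_nat)+
      have "Lq q a (m+2) = R q a (int (m+2))" if a: "a \<le> 1" for a
      proof -
        have "Lq q a (m+2) = (1+q) * Lq q a (m+1) - q * (1 - q^(2*m+2)) * Lq q a m + q^(2*m+3) * Lq q (1-a) (m+1)"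
          by (rule Lq_rec[OF q(1) a])
        also have "\<dots> = (1+q) * R q a (int m + 1) - q * (1 - q powi (2*int m+2)) * R q a (int m)
           + q powi (2*int m+3) * R q (1-a) (int m + 1)"
          using Suc.IH a pw by (cases a) (auto simp: add.commute)
        also have "\<dots> = R q a (int (m+2))" unfolding e by (rule R_rec[OF q _ a, symmetric]) simp
        finally show ?thesis .
      qed
      thus ?case using Suc.IH by simp
    qed
  qed
  thus ?thesis by blast
qed


definition del :: "nat \<Rightarrow> int" where "del a = (if a = 1 then 1 else 0)"
definition TA :: "nat \<Rightarrow> nat \<Rightarrow> int \<Rightarrow> int" where
  "TA k a j = 12*(2+3*int k)*j^2 + 2*j*(1 - 6*del a*(1+int k)) + (1+int k)*del a"
definition TB :: "nat \<Rightarrow> nat \<Rightarrow> int \<Rightarrow> int" where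
  "TB k a j = 12*(2+3*int k)*j^2 + 2*j*(-7 - 12*int k - 6*del a*(1+int k)) + 2 + int k*(int a+2)^2 + 5*del a"

lemma del_a: "a \<le> 1 \<Longrightarrow> del a = int a" by (auto simp: del_def)

lemma jj: "0 \<le> (j::int) * (j - 1)"
  by (cases "j \<le> 0") (auto intro: mult_nonpos_nonpos mult_nonneg_nonneg)

lemma TA_Suc: "a \<le> 1 \<Longrightarrow> TA (Suc k) a j = TA k a j + (6*j - int a)^2"
  by (auto simp: TA_def del_def algebra_simps power2_eq_square le_Suc_eq)

lemma TB_Suc: "a \<le> 1 \<Longrightarrow> TB (Suc k) a j = TB k a j + (6*j - int a - 2)^2"
  by (auto simp: TB_def del_def algebra_simps power2_eq_square le_Suc_eq)

lemma sameSign: "(0 \<le> (x::int) \<and> 0 \<le> y) \<or> (x \<le> 0 \<and> y \<le> 0) \<Longrightarrow> 0 \<le> x * y"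
  by (auto intro: mult_nonneg_nonneg mult_nonpos_nonpos)

lemma TA0_nonneg: assumes "a \<le> 1" shows "0 \<le> TA 0 a j"
proof (cases "a = 0")
  case True
  have "TA 0 a j = (2*j) * (12*j+1)" using True by (simp add: TA_def del_def algebra_simps power2_eq_square)
  thus ?thesis by (simp only:) (rule sameSign, presburger)
next
  case False
  hence "a = 1" using assms by simp
  hence "TA 0 a j = (4*j-1) * (6*j-1)" by (simp add: TA_def del_def algebra_simps power2_eq_square)
  thus ?thesis by (simp only:) (rule sameSign, presburger)
qed

lemma TB0_nonneg: assumes "a \<le> 1" shows "0 \<le> TB 0 a j"
proof (cases "a = 0")
  case True
  have "TB 0 a j = (2*(3*j-1)) * (4*j-1)" using True by (simp add: TB_def del_def algebra_simps power2_eq_square)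
  thus ?thesis by (simp only:) (rule sameSign, presburger)
next
  case False
  hence "a = 1" using assms by simp
  hence "TB 0 a j = (2*j-1) * (12*j-7)" by (simp add: TB_def del_def algebra_simps power2_eq_square)
  thus ?thesis by (simp only:) (rule sameSign, presburger)
qed

lemma TA_k: "a \<le> 1 \<Longrightarrow> TA k a j = TA 0 a j + int k * (6*j - int a)^2"
  by (induction k) (simp_all add: TA_Suc algebra_simps)

lemma TB_k: "a \<le> 1 \<Longrightarrow> TB k a j = TB 0 a j + int k * (6*j - int a - 2)^2"
  by (induction k) (simp_all add: TB_Suc algebra_simps)

lemma TA_nonneg: assumes "a \<le> 1" shows "0 \<le> TA k a j"
proof -
  have "0 \<le> int k * (6*j - int a)^2" by simp
  thus ?thesis using TA0_nonneg[OF assms, of j] TA_k[OF assms, of k j] by linarith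
qed

lemma TB_nonneg: assumes "a \<le> 1" shows "0 \<le> TB k a j"
proof -
  have "0 \<le> int k * (6*j - int a - 2)^2" by simp
  thus ?thesis using TB0_nonneg[OF assms, of j] TB_k[OF assms, of k j] by linarith
qed

lemma powi_add_nonneg: "0 \<le> e \<Longrightarrow> (q::complex) powi e * q ^ n = q powi (e + int n)"
proof -
  assume "0 \<le> e"
  then obtain m where "e = int m" by (metis nonneg_int_cases)
  thus ?thesis by (simp add: power_add flip: of_nat_add)
qed

lemma P2N: "qpoch q q (2*N) = qpoch q (q^2) N * GG q N"
proof (induction N)
  case 0 thus ?case by (simp add: GG_def)
next
  case (Suc N)
  have a: "qpoch q q (2 * Suc N) = qpoch q q (2*N) * (1 - q^(2*N+1)) * (1 - q^(2*N+2))"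
  proof -
    have "2 * Suc N = Suc (Suc (2*N))" by simp
    hence "qpoch q q (2 * Suc N) = qpoch q q (2*N) * (1 - q * q^(2*N)) * (1 - q * q^(Suc (2*N)))"
      by (simp only: qpoch_Suc)
    thus ?thesis by simp
  qed
  have b: "qpoch q (q^2) (Suc N) = qpoch q (q^2) N * (1 - q^(2*N+1))"
    by (simp add: qpoch_Suc power_mult)
  show ?case unfolding a b GG_Suc Suc.IH by (simp add: algebra_simps)
qed

definition beta0 :: "complex \<Rightarrow> nat \<Rightarrow> nat \<Rightarrow> complex" where
  "beta0 q a N = (\<Sum>s=0..N. (if s mod 2 = a then q^(s^2) * iq q (int N - int s) / GG q s else 0)) / qpoch q (q^2) N"

lemma beta0_L: assumes q: "norm q < 1" shows "qpoch q q (2*N) * beta0 q a N = Lq q a N"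
proof -
  have nz: "qpoch q (q^2) N \<noteq> 0" using qpoch12_nz[OF q] by simp
  have "ell q a N = (\<Sum>s=0..N. (if s mod 2 = a then q^(s^2) * iq q (int N - int s) / GG q s else 0))"
    unfolding ell_def by (rule sum.cong) auto
  thus ?thesis using nz by (simp add: P2N beta0_def Lq_def)
qed

lemma PH: assumes q: "norm q < 1" shows "qpoch q q (2*N) * H q N r = qbinom q (2*int N) (int N - r)"
proof (cases "\<bar>r\<bar> \<le> int N")
  case True
  define u where "u = nat (int N - r)"
  define v where "v = nat (int N + r)"
  have u: "int N - r = int u" and v: "int N + r = int v" and uv: "u + v = 2*N"
    using True by (auto simp: u_def v_def)
  have h: "H q N r = 1 / (qpoch q q u * qpoch q q v)" unfolding H_def u v iq_nat by simp
  have "qbinom q (2*int N) (int N - r) = qbinom q (int (2*N)) (int u)" using u by simp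
  also have "\<dots> = qb q (2*N) u" by (rule qbinom_nat)
  also have "\<dots> = qpoch q q (2*N) / (qpoch q q u * qpoch q q v)"
  proof -
    have "2*N - u = v" using uv by simp
    thus ?thesis using uv by (simp add: qb_def)
  qed
  finally show ?thesis unfolding h by simp
next
  case False
  thus ?thesis by (auto simp: H_def qbinom_def iq_neg)
qed


lemma infsum_neg_int: "(\<Sum>\<^sub>\<infinity>i::int. f i) = (\<Sum>\<^sub>\<infinity>j::int. f (-j))"
  by (rule infsum_reindex_bij_betw[symmetric]) (rule bij_betwI[where g=uminus], auto)

lemma infsum_shift_int: "(\<Sum>\<^sub>\<infinity>i::int. f i) = (\<Sum>\<^sub>\<infinity>j::int. f (j - 1))"
  by (rule infsum_reindex_bij_betw[symmetric]) (rule bij_betwI[where g="\<lambda>i. i + 1"], auto)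

lemma R_orient:
  assumes a: "a \<le> 1"
  shows "R q a (int N) = (\<Sum>\<^sub>\<infinity>j. q powi (TA 0 a j) * qbinom q (2*int N) (int N - (6*j - int a)))
     - (\<Sum>\<^sub>\<infinity>j. q powi (TB 0 a j) * qbinom q (2*int N) (int N - (6*j - int a - 2)))"
proof (cases "a = 0")
  case True
  have 1: "Fam q (2*int N) (\<lambda>i. 24*i^2 - 2*i) (int N) = (\<Sum>\<^sub>\<infinity>j. q powi (TA 0 a j) * qbinom q (2*int N) (int N - (6*j - int a)))"
    unfolding Fam_def by (subst infsum_neg_int) (rule infsum_cong, simp add: TA_def del_def True algebra_simps)
  have 2: "Fam q (2*int N) (\<lambda>i. 24*i^2 + 34*i + 12) (int N + 4) = (\<Sum>\<^sub>\<infinity>j. q powi (TB 0 a j) * qbinom q (2*int N) (int N - (6*j - int a - 2)))"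
    unfolding Fam_def
  proof (subst infsum_shift_int, rule infsum_cong)
    fix j :: int
    have "qbinom q (2*int N) (6*(j-1) + (int N + 4)) = qbinom q (2*int N) (2*int N - (6*(j-1) + (int N + 4)))"
      by (rule qbinom_sym)
    thus "q powi (24*(j-1)^2 + 34*(j-1) + 12) * qbinom q (2*int N) (6*(j-1) + (int N + 4))
       = q powi (TB 0 a j) * qbinom q (2*int N) (int N - (6*j - int a - 2))"
      by (simp add: TB_def del_def True algebra_simps power2_eq_square)
  qed
  show ?thesis unfolding R_def Q0e_def using True 1 2 by simp
next
  case False
  hence a1: "a = 1" using a by simp
  have 1: "Fam q (2*int N) (\<lambda>i. 24*i^2 + 10*i + 1) (int N + 1) = (\<Sum>\<^sub>\<infinity>j. q powi (TA 0 a j) * qbinom q (2*int N) (int N - (6*j - int a)))"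
    unfolding Fam_def by (subst infsum_neg_int) (rule infsum_cong, simp add: TA_def del_def a1 algebra_simps)
  have 2: "Fam q (2*int N) (\<lambda>i. 24*i^2 + 22*i + 5) (int N + 3) = (\<Sum>\<^sub>\<infinity>j. q powi (TB 0 a j) * qbinom q (2*int N) (int N - (6*j - int a - 2)))"
    unfolding Fam_def
  proof (subst infsum_shift_int, rule infsum_cong)
    fix j :: int
    have "qbinom q (2*int N) (6*(j-1) + (int N + 3)) = qbinom q (2*int N) (2*int N - (6*(j-1) + (int N + 3)))"
      by (rule qbinom_sym)
    thus "q powi (24*(j-1)^2 + 22*(j-1) + 5) * qbinom q (2*int N) (6*(j-1) + (int N + 3))
       = q powi (TB 0 a j) * qbinom q (2*int N) (int N - (6*j - int a - 2))"
      by (simp add: TB_def del_def a1 algebra_simps power2_eq_square)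
  qed
  show ?thesis unfolding R_def Q1e_def using a1 1 2 by (simp add: add.commute)
qed

lemma qpoch00: "qpoch 0 0 n = 1" by (simp add: qpoch_def)
lemma qpoch000: "qpoch (0^2) (0^2) n = (1::complex)" by (simp add: qpoch_def)

lemma base_zero:
  assumes a: "a \<le> 1"
  shows "Lq 0 a m = R 0 a (int m)"
proof -
  have L: "Lq 0 a m = (if a = 0 then 1 else 0)"
  proof -
    have "ell 0 a m = (\<Sum>s=0..m. (if s = 0 \<and> a = 0 then 1 else 0))"
      unfolding ell_def by (rule sum.cong) (auto simp: GG_def qpoch000 iq_nat qpoch00)
    also have "\<dots> = (if a = 0 then 1 else 0)" by simp
    finally show ?thesis by (simp add: Lq_def GG_def qpoch000 qpoch00)
  qed
  have A: "Fam 0 (2*int m) (\<lambda>i. 24*i^2 - 2*i) (int m) = 1"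
  proof (subst Fam_single[of 0])
    fix i :: int assume "i \<noteq> 0"
    hence "24*i^2 - 2*i \<noteq> 0" by (simp add: power2_eq_square)
    thus "0 powi (24*i^2 - 2*i) * qbinom 0 (2*int m) (6*i + int m) = 0" by simp
  next
    show "0 powi (24*0^2 - 2*0) * qbinom 0 (2*int m) (6*0 + int m) = 1"
      by (simp add: qbinom_def qpoch00)
  qed
  have z: "(j::int) \<noteq> 0 \<Longrightarrow> (0::complex) powi j * x = 0" for j x by simp
  have B1: "Fam 0 (2*int m) (\<lambda>i. 24*i^2 + 34*i + 12) (int m + 4) = 0"
  proof (rule Fam_zero, rule z)
    fix i :: int
    have "24*i^2 + 34*i + 12 = 2*((3*i+2)*(4*i+3))" by (simp add: algebra_simps power2_eq_square)
    moreover have "3*i+2 \<noteq> 0" "4*i+3 \<noteq> 0" by presburger+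
    ultimately show "24*i^2 + 34*i + 12 \<noteq> 0" by simp
  qed
  have B2: "Fam 0 (2*int m) (\<lambda>i. 24*i^2 + 10*i + 1) (int m + 1) = 0"
  proof (rule Fam_zero, rule z)
    fix i :: int
    have "24*i^2 + 10*i + 1 = (4*i+1)*(6*i+1)" by (simp add: algebra_simps power2_eq_square)
    moreover have "4*i+1 \<noteq> 0" "6*i+1 \<noteq> 0" by presburger+
    ultimately show "24*i^2 + 10*i + 1 \<noteq> 0" by simp
  qed
  have B3: "Fam 0 (2*int m) (\<lambda>i. 24*i^2 + 22*i + 5) (int m + 3) = 0"
  proof (rule Fam_zero, rule z)
    fix i :: int
    have "24*i^2 + 22*i + 5 = (2*i+1)*(12*i+5)" by (simp add: algebra_simps power2_eq_square)
    moreover have "2*i+1 \<noteq> 0" "12*i+5 \<noteq> 0" by presburger+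
    ultimately show "24*i^2 + 22*i + 5 \<noteq> 0" by simp
  qed
  note B = B1 B2 B3
  show ?thesis using L A B a by (auto simp: R_def Q0e_def Q1e_def)
qed

lemma base_all:
  assumes q: "norm q < 1" and a: "a \<le> 1"
  shows "Lq q a m = R q a (int m)"
proof (cases "q = 0")
  case True thus ?thesis using base_zero[OF a] by simp
next
  case False
  have "a = 0 \<or> a = 1" using a by auto
  thus ?thesis using base_nonzero_q[OF q False, of m] by (elim disjE) simp_all
qed


lemma base_pair:
  assumes q: "norm q < 1" and a: "a \<le> 1"
  shows "beta0 q a N = (\<Sum>\<^sub>\<infinity>j. q powi (TA 0 a j) * H q N (6*j - int a))
     - (\<Sum>\<^sub>\<infinity>j. q powi (TB 0 a j) * H q N (6*j - int a - 2))"
proof -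
  define P where "P = qpoch q q (2*N)"
  have nz: "P \<noteq> 0" using qpoch_nz[OF q] by (simp add: P_def)
  have "P * beta0 q a N = R q a (int N)" unfolding P_def beta0_L[OF q] by (rule base_all[OF q a])
  also have "\<dots> = P * (\<Sum>\<^sub>\<infinity>j. q powi (TA 0 a j) * H q N (6*j - int a))
     - P * (\<Sum>\<^sub>\<infinity>j. q powi (TB 0 a j) * H q N (6*j - int a - 2))"
    unfolding R_orient[OF a] infsum_cmult_right'[symmetric]
    by (simp add: P_def mult.left_commute[of "qpoch q q (2*N)"] PH[OF q])
  finally have "P * beta0 q a N = P * ((\<Sum>\<^sub>\<infinity>j. q powi (TA 0 a j) * H q N (6*j - int a))
     - (\<Sum>\<^sub>\<infinity>j. q powi (TB 0 a j) * H q N (6*j - int a - 2)))" by (simp add: right_diff_distrib)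
  thus ?thesis using nz by simp
qed

primrec beta :: "complex \<Rightarrow> nat \<Rightarrow> nat \<Rightarrow> nat \<Rightarrow> complex" where
  "beta q a 0 X = beta0 q a X"
| "beta q a (Suc k) X = (\<Sum>N=0..X. q^(N^2) * iq q (int X - int N) * beta q a k N)"

definition "W X = {-(int X+1)..int X+1}"

lemma H_window:
  assumes "N \<le> X" "0 \<le> c" "c \<le> 3" "j \<notin> W X"
  shows "H q N (6*j - c) = 0"
proof (rule H_zero)
  from assms(4) have "j \<ge> int X + 2 \<or> j \<le> -(int X) - 2" by (auto simp: W_def)
  thus "int N < \<bar>6*j - c\<bar>" using assms(1-3) by auto
qed

lemma rep_window:
  assumes "N \<le> X" "0 \<le> c" "c \<le> 3"
  shows "(\<Sum>\<^sub>\<infinity>j. f j * H q N (6*j - c)) = (\<Sum>j\<in>W X. f j * H q N (6*j - c))"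
  by (rule fsupp_infsum) (auto simp: W_def H_window[OF assms])

lemma beta_rep:
  assumes q: "norm q < 1" and a: "a \<le> 1"
  shows "beta q a k X = (\<Sum>\<^sub>\<infinity>j. q powi (TA k a j) * H q X (6*j - int a))
     - (\<Sum>\<^sub>\<infinity>j. q powi (TB k a j) * H q X (6*j - int a - 2))"
proof (induction k arbitrary: X)
  case 0 thus ?case using base_pair[OF q a] by simp
next
  case (Suc k)
  have ca: "0 \<le> int a" "int a \<le> 3" "0 \<le> int a + 2" "int a + 2 \<le> 3" using a by auto
  have e2: "6*j - int a - 2 = 6*j - (int a + 2)" for j :: int by simp
  have IH: "beta q a k N = (\<Sum>j\<in>W X. q powi (TA k a j) * H q N (6*j - int a))
     - (\<Sum>j\<in>W X. q powi (TB k a j) * H q N (6*j - int a - 2))" if "N \<le> X" for N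
    unfolding Suc.IH e2 rep_window[OF that ca(1,2)] rep_window[OF that ca(3,4)] by simp
  have K: "(\<Sum>N=0..X. q^(N^2) * iq q (int X - int N) * (q powi (T j) * H q N r))
        = q powi (T j + r^2) * H q X r" if "0 \<le> T j" for T :: "int \<Rightarrow> int" and j r
  proof -
    have "(\<Sum>N=0..X. q^(N^2) * iq q (int X - int N) * (q powi (T j) * H q N r))
        = q powi (T j) * (\<Sum>N=0..X. q^(N^2) * iq q (int X - int N) * H q N r)"
      by (simp add: sum_distrib_left algebra_simps)
    also have "\<dots> = q powi (T j) * q^(nat \<bar>r\<bar> ^ 2) * H q X r" by (simp add: Key[OF q])
    also have "q powi (T j) * q^(nat \<bar>r\<bar> ^ 2) = q powi (T j + r^2)"
      using powi_add_nonneg[OF that, of q "nat \<bar>r\<bar> ^ 2"] by simp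
    finally show ?thesis .
  qed
  have "beta q a (Suc k) X = (\<Sum>N=0..X. q^(N^2) * iq q (int X - int N) *
       ((\<Sum>j\<in>W X. q powi (TA k a j) * H q N (6*j - int a))
       - (\<Sum>j\<in>W X. q powi (TB k a j) * H q N (6*j - int a - 2))))"
    by (simp add: IH)
  also have "\<dots> = (\<Sum>j\<in>W X. (\<Sum>N=0..X. q^(N^2) * iq q (int X - int N) * (q powi (TA k a j) * H q N (6*j - int a))))
     - (\<Sum>j\<in>W X. (\<Sum>N=0..X. q^(N^2) * iq q (int X - int N) * (q powi (TB k a j) * H q N (6*j - int a - 2))))"
    by (simp add: right_diff_distrib sum_subtractf sum_distrib_left sum.swap[of _ "{0..X}"])
  also have "\<dots> = (\<Sum>j\<in>W X. q powi (TA (Suc k) a j) * H q X (6*j - int a))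
     - (\<Sum>j\<in>W X. q powi (TB (Suc k) a j) * H q X (6*j - int a - 2))"
    using K[of "TA k a"] K[of "TB k a"] TA_nonneg[OF a] TB_nonneg[OF a]
    by (simp add: TA_Suc[OF a] TB_Suc[OF a])
  also have "\<dots> = (\<Sum>\<^sub>\<infinity>j. q powi (TA (Suc k) a j) * H q X (6*j - int a))
     - (\<Sum>\<^sub>\<infinity>j. q powi (TB (Suc k) a j) * H q X (6*j - int a - 2))"
    unfolding e2 rep_window[OF order_refl ca(1,2)] rep_window[OF order_refl ca(3,4)] by simp
  finally show ?case .
qed


definition Sset :: "nat \<Rightarrow> nat \<Rightarrow> (nat \<Rightarrow> nat) set" where
  "Sset k a = {n. (\<forall>i. i \<notin> {1..k+1} \<longrightarrow> n i = 0) \<and> n (k+1) mod 2 = a}"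
definition Bset :: "nat \<Rightarrow> nat \<Rightarrow> nat \<Rightarrow> (nat \<Rightarrow> nat) set" where
  "Bset k a X = {n \<in> Sset k a. \<forall>i. n i \<le> X}"
definition NN :: "nat \<Rightarrow> (nat \<Rightarrow> nat) \<Rightarrow> nat \<Rightarrow> nat" where
  "NN k n i = (\<Sum>j=i..k+1. n j)"
definition V :: "complex \<Rightarrow> nat \<Rightarrow> (nat \<Rightarrow> nat) \<Rightarrow> complex" where
  "V q k n = q^(\<Sum>i=1..k+1. (NN k n i)^2) / ((\<Prod>i=1..k. qpoch q q (n i)) * qpoch (q^2) (q^2) (n (k+1)) * qpoch q (q^2) (n k + n (k+1)))"
definition Phi :: "complex \<Rightarrow> nat \<Rightarrow> nat \<Rightarrow> nat \<Rightarrow> complex" where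
  "Phi q k a X = (\<Sum>n\<in>Bset k a X. iq q (int X - int (NN k n 1)) * V q k n)"

lemma Bset_finite: "finite (Bset k a X)"
proof -
  have "Bset k a X \<subseteq> {f. \<forall>x. (x \<in> {1..k+1} \<longrightarrow> f x \<in> {0..X}) \<and> (x \<notin> {1..k+1} \<longrightarrow> f x = 0)}"
    by (auto simp: Bset_def Sset_def)
  moreover have "finite {f. \<forall>x. (x \<in> {1..k+1} \<longrightarrow> f x \<in> {0..X}) \<and> (x \<notin> {1..k+1} \<longrightarrow> f x = (0::nat))}"
    by (rule finite_set_of_finite_funs) auto
  ultimately show ?thesis by (rule finite_subset)
qed

lemma NN_ge: "i \<in> {1..k+1} \<Longrightarrow> n i \<le> NN k n 1"
  unfolding NN_def by (rule member_le_sum) auto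

lemma outside_Bset_zero:
  assumes "n \<in> Sset k a" "n \<notin> Bset k a X"
  shows "iq q (int X - int (NN k n 1)) = 0"
proof -
  from assms obtain i where i: "n i > X" by (auto simp: Bset_def not_le)
  with assms(1) have "i \<in> {1..k+1}" by (auto simp: Sset_def)
  hence "NN k n 1 > X" using NN_ge[of i k n] i by simp
  thus ?thesis by (simp add: iq_neg)
qed

lemma Bset_mono: "N \<le> X \<Longrightarrow> Bset k a N \<subseteq> Bset k a X" by (auto simp: Bset_def intro: le_trans)

definition comb :: "nat \<Rightarrow> (nat \<Rightarrow> nat) \<Rightarrow> (nat \<Rightarrow> nat)" where
  "comb n1 n' = (\<lambda>i. if i = 0 then 0 else if i = 1 then n1 else n' (i - 1))"
definition down :: "(nat \<Rightarrow> nat) \<Rightarrow> (nat \<Rightarrow> nat)" where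
  "down n = (\<lambda>i. if i = 0 then 0 else n (i+1))"

lemma comb_bij:
  assumes k: "k \<ge> 1"
  shows "bij_betw (\<lambda>p. comb (fst p) (snd p)) ({0..X} \<times> Bset k a X) (Bset (k+1) a X)"
proof (rule bij_betwI[where g="\<lambda>n. (n 1, down n)"])
  show "(\<lambda>p. comb (fst p) (snd p)) \<in> {0..X} \<times> Bset k a X \<rightarrow> Bset (k+1) a X"
  proof
    fix p assume p: "p \<in> {0..X} \<times> Bset k a X"
    obtain n1 n' where pp: "p = (n1, n')" by (cases p)
    have n': "n' \<in> Bset k a X" "n1 \<le> X" using p pp by auto
    have z: "\<forall>i. i \<notin> {1..k+1} \<longrightarrow> n' i = 0" "n' (k+1) mod 2 = a" "\<forall>i. n' i \<le> X"
      using n'(1) by (auto simp: Bset_def Sset_def)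
    have "\<forall>i. i \<notin> {1..k+1+1} \<longrightarrow> comb n1 n' i = 0"
    proof (intro allI impI)
      fix i assume i: "i \<notin> {1..k+1+1}"
      show "comb n1 n' i = 0"
      proof (cases "i = 0")
        case False
        hence "i > k+2" using i by auto
        hence "i - 1 \<notin> {1..k+1}" "i \<noteq> 1" using k by auto
        thus ?thesis using z(1) False by (simp add: comb_def)
      qed (simp add: comb_def)
    qed
    moreover have "comb n1 n' (k+1+1) mod 2 = a" using z(2) by (simp add: comb_def)
    moreover have "\<forall>i. comb n1 n' i \<le> X" using z(3) n'(2) by (simp add: comb_def)
    ultimately show "comb (fst p) (snd p) \<in> Bset (k+1) a X" using pp by (simp add: Bset_def Sset_def)
  qed
  show "(\<lambda>n. (n 1, down n)) \<in> Bset (k+1) a X \<rightarrow> {0..X} \<times> Bset k a X"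
    using k by (auto simp: Bset_def Sset_def down_def)
  show "(comb (fst p) (snd p) 1, down (comb (fst p) (snd p))) = p" if "p \<in> {0..X} \<times> Bset k a X" for p
  proof -
    obtain n1 n' where pp: "p = (n1, n')" by (cases p)
    have "n' 0 = 0" using that pp by (auto simp: Bset_def Sset_def)
    hence "down (comb n1 n') = n'" by (auto simp: down_def comb_def)
    thus ?thesis using pp by (simp add: comb_def)
  qed
  show "comb (fst (n 1, down n)) (snd (n 1, down n)) = n" if "n \<in> Bset (k+1) a X" for n
  proof -
    have "n 0 = 0" using that by (auto simp: Bset_def Sset_def)
    thus ?thesis by (auto simp: comb_def down_def)
  qed
qed


lemma NN_comb_Suc:
  assumes "i \<ge> 1"
  shows "NN (Suc k) (comb n1 n') (Suc i) = NN k n' i"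
proof -
  have "NN (k+1) (comb n1 n') (Suc i) = (\<Sum>j=i+1..(k+1)+1. comb n1 n' j)" by (simp add: NN_def)
  also have "\<dots> = (\<Sum>j=i..k+1. comb n1 n' (j+1))" by (rule sum.shift_bounds_cl_nat_ivl)
  also have "\<dots> = (\<Sum>j=i..k+1. n' j)" by (rule sum.cong) (use assms in \<open>auto simp: comb_def\<close>)
  finally show ?thesis by (simp add: NN_def)
qed

lemma NN_comb_1: "NN (k+1) (comb n1 n') 1 = n1 + NN k n' 1"
proof -
  have "NN (k+1) (comb n1 n') 1 = comb n1 n' 1 + (\<Sum>j=Suc 1..k+2. comb n1 n' j)"
    unfolding NN_def by (subst sum.atLeast_Suc_atMost) auto
  also have "(\<Sum>j=Suc 1..k+2. comb n1 n' j) = NN (k+1) (comb n1 n') (Suc 1)" by (simp add: NN_def)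
  also have "\<dots> = NN k n' 1" using NN_comb_Suc[of 1 k n1 n'] by simp
  finally show ?thesis by (simp add: comb_def)
qed

lemma sq_comb: "(\<Sum>i=1..k+2. (NN (k+1) (comb n1 n') i)^2) = (n1 + NN k n' 1)^2 + (\<Sum>i=1..k+1. (NN k n' i)^2)"
proof -
  have "(\<Sum>i=1..k+2. (NN (k+1) (comb n1 n') i)^2) = (NN (k+1) (comb n1 n') 1)^2 + (\<Sum>i=Suc 1..k+2. (NN (k+1) (comb n1 n') i)^2)"
    by (subst sum.atLeast_Suc_atMost) auto
  also have "(\<Sum>i=Suc 1..k+2. (NN (k+1) (comb n1 n') i)^2) = (\<Sum>i=1..k+1. (NN (k+1) (comb n1 n') (i+1))^2)"
    using sum.shift_bounds_cl_nat_ivl[of "\<lambda>i. (NN (k+1) (comb n1 n') i)^2" 1 1 "k+1"] by simp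
  also have "\<dots> = (\<Sum>i=1..k+1. (NN k n' i)^2)" by (rule sum.cong) (auto simp: NN_comb_Suc)
  finally show ?thesis using NN_comb_1[of k n1 n'] by simp
qed

lemma prod_comb: "(\<Prod>i=1..k+1. f (comb n1 n' i)) = f n1 * (\<Prod>i=1..k. f (n' i))"
proof -
  have "(\<Prod>i=1..k+1. f (comb n1 n' i)) = f (comb n1 n' 1) * (\<Prod>i=Suc 1..k+1. f (comb n1 n' i))"
    by (subst prod.atLeast_Suc_atMost) auto
  also have "(\<Prod>i=Suc 1..k+1. f (comb n1 n' i)) = (\<Prod>i=1..k. f (comb n1 n' (i+1)))"
    using prod.shift_bounds_cl_nat_ivl[of "\<lambda>i. f (comb n1 n' i)" 1 1 k] by simp
  also have "\<dots> = (\<Prod>i=1..k. f (n' i))" by (rule prod.cong) (auto simp: comb_def)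
  finally show ?thesis by (simp add: comb_def)
qed

lemma V_comb:
  assumes k: "k \<ge> 1"
  shows "V q (k+1) (comb n1 n') = q^((n1 + NN k n' 1)^2) * iq q (int n1) * V q k n'"
proof -
  have c1: "comb n1 n' (k+1+1) = n' (k+1)" "comb n1 n' (k+1) = n' k" using k by (auto simp: comb_def)
  have "V q (k+1) (comb n1 n') = q^((n1 + NN k n' 1)^2 + (\<Sum>i=1..k+1. (NN k n' i)^2))
     / ((qpoch q q n1 * (\<Prod>i=1..k. qpoch q q (n' i))) * qpoch (q^2) (q^2) (n' (k+1)) * qpoch q (q^2) (n' k + n' (k+1)))"
    unfolding V_def c1 prod_comb[of "qpoch q q"] using sq_comb[of k n1 n'] by (simp add: add.commute[of k 1])
  also have "\<dots> = q^((n1 + NN k n' 1)^2) * iq q (int n1) * V q k n'"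
    by (simp add: V_def iq_nat power_add)
  finally show ?thesis .
qed

lemma shift_sum:
  assumes g: "\<And>N. N > X \<Longrightarrow> g N = 0"
  shows "(\<Sum>N=0..X. iq q (int N - int s) * g N) = (\<Sum>n=0..X. iq q (int n) * g (n + s))"
proof -
  have l: "(\<Sum>N=0..X. iq q (int N - int s) * g N) = (\<Sum>N\<in>{s..X}. iq q (int N - int s) * g N)"
    by (rule sum.mono_neutral_right) (auto simp: iq_neg)
  have "(\<Sum>n=0..X. iq q (int n) * g (n + s)) = (\<Sum>N\<in>(\<lambda>n. n + s) ` {0..X}. iq q (int N - int s) * g N)"
    by (subst sum.reindex) (auto simp: inj_on_def)
  also have "(\<lambda>n. n + s) ` {0..X} = {s..X+s}"
    by (auto simp: image_iff)
  also have "(\<Sum>N\<in>{s..X+s}. iq q (int N - int s) * g N) = (\<Sum>N\<in>{s..X}. iq q (int N - int s) * g N)"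
    by (rule sum.mono_neutral_right) (auto simp: g)
  finally show ?thesis using l by simp
qed

lemma Phi_step:
  assumes q: "norm q < 1" and k: "k \<ge> 1"
  shows "Phi q (k+1) a X = (\<Sum>N=0..X. q^(N^2) * iq q (int X - int N) * Phi q k a N)"
proof -
  define s where "s = (\<lambda>n'. NN k n' 1)"
  have "Phi q (k+1) a X = (\<Sum>p\<in>{0..X} \<times> Bset k a X. iq q (int X - int (NN (k+1) (comb (fst p) (snd p)) 1)) * V q (k+1) (comb (fst p) (snd p)))"
    unfolding Phi_def by (rule sum.reindex_bij_betw[symmetric, OF comb_bij[OF k]])
  also have "\<dots> = (\<Sum>(n1,n')\<in>{0..X} \<times> Bset k a X. iq q (int n1) * (q^((n1 + s n')^2) * iq q (int X - int (n1 + s n')) * V q k n'))"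
    by (rule sum.cong) (auto simp: NN_comb_1[simplified] V_comb[OF k, simplified] s_def algebra_simps)
  also have "\<dots> = (\<Sum>n1=0..X. \<Sum>n'\<in>Bset k a X. iq q (int n1) * (q^((n1 + s n')^2) * iq q (int X - int (n1 + s n')) * V q k n'))"
    by (rule sum.cartesian_product[symmetric])
  also have "\<dots> = (\<Sum>n'\<in>Bset k a X. \<Sum>n1=0..X. iq q (int n1) * (q^((n1 + s n')^2) * iq q (int X - int (n1 + s n')) * V q k n'))"
    by (rule sum.swap)
  also have "\<dots> = (\<Sum>n'\<in>Bset k a X. \<Sum>N=0..X. iq q (int N - int (s n')) * (q^(N^2) * iq q (int X - int N) * V q k n'))"
    by (rule sum.cong[OF refl], rule shift_sum[symmetric]) (simp add: iq_neg)
  also have "\<dots> = (\<Sum>N=0..X. \<Sum>n'\<in>Bset k a X. q^(N^2) * iq q (int X - int N) * (iq q (int N - int (s n')) * V q k n'))"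
    by (subst sum.swap) (simp add: algebra_simps)
  also have "\<dots> = (\<Sum>N=0..X. q^(N^2) * iq q (int X - int N) * Phi q k a N)"
  proof (rule sum.cong[OF refl])
    fix N assume "N \<in> {0..X}"
    hence NX: "N \<le> X" by simp
    have "Phi q k a N = (\<Sum>n'\<in>Bset k a X. iq q (int N - int (s n')) * V q k n')"
      unfolding Phi_def s_def
    proof (rule sum.mono_neutral_left[OF Bset_finite Bset_mono[OF NX]])
      show "\<forall>i\<in>Bset k a X - Bset k a N. iq q (int N - int (NN k i 1)) * V q k i = 0"
      proof
        fix n assume "n \<in> Bset k a X - Bset k a N"
        hence "n \<in> Sset k a" "n \<notin> Bset k a N" by (auto simp: Bset_def)
        thus "iq q (int N - int (NN k n 1)) * V q k n = 0" using outside_Bset_zero by simp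
      qed
    qed
    thus "(\<Sum>n'\<in>Bset k a X. q^(N^2) * iq q (int X - int N) * (iq q (int N - int (s n')) * V q k n'))
        = q^(N^2) * iq q (int X - int N) * Phi q k a N" by (simp add: sum_distrib_left)
  qed
  finally show ?thesis .
qed


definition h2 :: "nat \<times> nat \<Rightarrow> (nat \<Rightarrow> nat)" where
  "h2 p = (\<lambda>i. if i = 1 then fst p else if i = 2 then snd p else 0)"

definition "Cs a X = {s \<in> {0..X}. s mod 2 = a}"

lemma h2_bij: "bij_betw h2 ({0..X} \<times> Cs a X) (Bset 1 a X)"
proof (rule bij_betwI[where g="\<lambda>n. (n 1, n 2)"])
  show "h2 \<in> {0..X} \<times> Cs a X \<rightarrow> Bset 1 a X"
    by (auto simp: h2_def Cs_def Bset_def Sset_def)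
  show "(\<lambda>n. (n 1, n 2)) \<in> Bset 1 a X \<rightarrow> {0..X} \<times> Cs a X"
    by (auto simp: Cs_def Bset_def Sset_def numeral_2_eq_2)
  show "(h2 p 1, h2 p 2) = p" for p by (simp add: h2_def)
  show "h2 (n 1, n 2) = n" if "n \<in> Bset 1 a X" for n
  proof
    fix i
    show "h2 (n 1, n 2) i = n i"
    proof (cases "i \<in> {1..2}")
      case True hence "i = 1 \<or> i = 2" by auto
      thus ?thesis by (auto simp: h2_def)
    next
      case False thus ?thesis using that by (auto simp: h2_def Bset_def Sset_def)
    qed
  qed
qed

lemma V1: "V q 1 (h2 (n1, s)) = q^((n1+s)^2 + s^2) / (qpoch q q n1 * GG q s * qpoch q (q^2) (n1 + s))"
  "NN 1 (h2 (n1, s)) 1 = n1 + s"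
proof -
  have a: "NN 1 (h2 (n1, s)) 1 = n1 + s" by (simp add: NN_def h2_def numeral_2_eq_2)
  have b: "NN 1 (h2 (n1, s)) 2 = s" by (simp add: NN_def h2_def)
  have c: "(\<Sum>i=1..1+1. (NN 1 (h2 (n1, s)) i)^2) = (n1+s)^2 + s^2"
    using a b by (simp add: numeral_2_eq_2)
  show "V q 1 (h2 (n1, s)) = q^((n1+s)^2 + s^2) / (qpoch q q n1 * GG q s * qpoch q (q^2) (n1 + s))"
    unfolding V_def c by (simp add: h2_def GG_def)
  show "NN 1 (h2 (n1, s)) 1 = n1 + s" by (rule a)
qed

lemma Phi_1:
  assumes q: "norm q < 1"
  shows "Phi q 1 a X = beta q a 1 X"
proof -
  define g where "g = (\<lambda>s N. q^(N^2) * iq q (int X - int N) * (q^(s^2) / (GG q s * qpoch q (q^2) N)))"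
  have "Phi q 1 a X = (\<Sum>p\<in>{0..X} \<times> Cs a X. iq q (int X - int (NN 1 (h2 p) 1)) * V q 1 (h2 p))"
    unfolding Phi_def by (rule sum.reindex_bij_betw[symmetric, OF h2_bij])
  also have "\<dots> = (\<Sum>(n1,s)\<in>{0..X} \<times> Cs a X. iq q (int n1) * g s (n1 + s))"
  proof (rule sum.cong[OF refl], clarify)
    fix n1 s
    have "iq q (int X - int (NN 1 (h2 (n1, s)) 1)) * V q 1 (h2 (n1, s))
        = iq q (int X - int (n1+s)) * (q^((n1+s)^2 + s^2) / (qpoch q q n1 * GG q s * qpoch q (q^2) (n1 + s)))"
      by (simp only: V1)
    also have "\<dots> = iq q (int n1) * g s (n1 + s)"
      by (simp add: g_def iq_nat power_add ac_simps)
    finally show "iq q (int X - int (NN 1 (h2 (n1, s)) 1)) * V q 1 (h2 (n1, s)) = iq q (int n1) * g s (n1 + s)" .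
  qed
  also have "\<dots> = (\<Sum>n1=0..X. \<Sum>s\<in>Cs a X. iq q (int n1) * g s (n1 + s))"
    by (rule sum.cartesian_product[symmetric])
  also have "\<dots> = (\<Sum>s\<in>Cs a X. \<Sum>n1=0..X. iq q (int n1) * g s (n1 + s))"
    by (rule sum.swap)
  also have "\<dots> = (\<Sum>s\<in>Cs a X. \<Sum>N=0..X. iq q (int N - int s) * g s N)"
    by (rule sum.cong[OF refl], rule shift_sum[symmetric]) (simp add: g_def iq_neg)
  also have "\<dots> = (\<Sum>N=0..X. \<Sum>s\<in>Cs a X. iq q (int N - int s) * g s N)"
    by (rule sum.swap)
  also have "\<dots> = (\<Sum>N=0..X. q^(N^2) * iq q (int X - int N) * beta0 q a N)"
  proof (rule sum.cong[OF refl])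
    fix N assume "N \<in> {0..X}"
    hence NX: "N \<le> X" by simp
    have "(\<Sum>s=0..N. (if s mod 2 = a then q^(s^2) * iq q (int N - int s) / GG q s else 0))
        = (\<Sum>s\<in>{s\<in>{0..N}. s mod 2 = a}. q^(s^2) * iq q (int N - int s) / GG q s)"
      by (rule sum.inter_filter[symmetric]) simp
    also have "\<dots> = (\<Sum>s\<in>Cs a X. q^(s^2) * iq q (int N - int s) / GG q s)"
      by (rule sum.mono_neutral_left) (use NX in \<open>auto simp: Cs_def iq_neg\<close>)
    finally have e: "(\<Sum>s=0..N. (if s mod 2 = a then q^(s^2) * iq q (int N - int s) / GG q s else 0))
        = (\<Sum>s\<in>Cs a X. q^(s^2) * iq q (int N - int s) / GG q s)" .
    show "(\<Sum>s\<in>Cs a X. iq q (int N - int s) * g s N) = q^(N^2) * iq q (int X - int N) * beta0 q a N"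
      unfolding beta0_def e g_def by (simp add: sum_distrib_left sum_divide_distrib algebra_simps)
  qed
  also have "\<dots> = beta q a 1 X" by simp
  finally show ?thesis .
qed

lemma Phi_beta:
  assumes q: "norm q < 1" and k: "k \<ge> 1"
  shows "Phi q k a X = beta q a k X"
  using k
proof (induction k arbitrary: X rule: dec_induct)
  case base thus ?case by (rule Phi_1[OF q])
next
  case (step k)
  have "Phi q (k+1) a X = (\<Sum>N=0..X. q^(N^2) * iq q (int X - int N) * Phi q k a N)"
    by (rule Phi_step[OF q step.hyps(1)])
  thus ?case by (simp add: step.IH)
qed


theorem mainTheorem13:
  fixes q :: complex and k a M :: nat
  assumes hq: "norm q < 1" and hk: "k \<ge> 1" and ha: "a \<in> {0, 1}"
  defines "\<delta> \<equiv> (if a = 1 then 1 else 0 :: int)"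
  shows "(\<Sum>\<^sub>\<infinity>n \<in> {n :: nat \<Rightarrow> nat. (\<forall>i. i \<notin> {1..k+1} \<longrightarrow> n i = 0) \<and> n (k+1) mod 2 = a}.
            (let N = (\<lambda>i. \<Sum>j = i..k+1. n j) in
             q ^ (\<Sum>i = 1..k+1. (N i)^2) * qpoch q q (2*M)
             * inv_qfac q (int M - int (N 1))
             / ((\<Prod>i = 1..k. qpoch q q (n i)) * qpoch (q^2) (q^2) (n (k+1))
                * qpoch q (q^2) (n k + n (k+1)))))
       = (\<Sum>\<^sub>\<infinity>j :: int.
            q powi (12*(2+3*int k)*j^2 + 2*j*(1 - 6*\<delta>*(1+int k)) + (1+int k)*\<delta>)
            * qbinom q (2*int M) (int M - 6*j + int a))
         - (\<Sum>\<^sub>\<infinity>j :: int.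
            q powi (12*(2+3*int k)*j^2 + 2*j*(-7 - 12*int k - 6*\<delta>*(1+int k)) + 2
                    + int k*(int a+2)^2 + 5*\<delta>)
            * qbinom q (2*int M) (int M - 6*j + int a + 2))"
proof -
  have a1: "a \<le> 1" using ha by auto
  have dl: "\<delta> = del a" by (simp add: \<delta>_def del_def)
  define P where "P = qpoch q q (2*M)"
  have tm: "(let N = (\<lambda>i. \<Sum>j = i..k+1. n j) in
             q ^ (\<Sum>i = 1..k+1. (N i)^2) * qpoch q q (2*M)
             * inv_qfac q (int M - int (N 1))
             / ((\<Prod>i = 1..k. qpoch q q (n i)) * qpoch (q^2) (q^2) (n (k+1))
                * qpoch q (q^2) (n k + n (k+1))))
       = P * (iq q (int M - int (NN k n 1)) * V q k n)" for n
    by (simp add: Let_def NN_def V_def P_def ac_simps)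
  have set: "{n :: nat \<Rightarrow> nat. (\<forall>i. i \<notin> {1..k+1} \<longrightarrow> n i = 0) \<and> n (k+1) mod 2 = a} = Sset k a"
    by (simp add: Sset_def)
  have "(\<Sum>\<^sub>\<infinity>n \<in> Sset k a. P * (iq q (int M - int (NN k n 1)) * V q k n))
      = (\<Sum>\<^sub>\<infinity>n \<in> Bset k a M. P * (iq q (int M - int (NN k n 1)) * V q k n))"
  proof (rule infsum_cong_neutral)
    fix n assume "n \<in> Sset k a - Bset k a M"
    hence "n \<in> Sset k a" "n \<notin> Bset k a M" by auto
    hence "iq q (int M - int (NN k n 1)) = 0" by (rule outside_Bset_zero)
    thus "P * (iq q (int M - int (NN k n 1)) * V q k n) = 0" by simp
  qed (auto simp: Bset_def)
  also have "\<dots> = P * Phi q k a M"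
    by (simp add: Bset_finite Phi_def sum_distrib_left)
  also have "\<dots> = P * beta q a k M" by (simp add: Phi_beta[OF hq hk])
  also have "\<dots> = P * (\<Sum>\<^sub>\<infinity>j. q powi (TA k a j) * H q M (6*j - int a))
     - P * (\<Sum>\<^sub>\<infinity>j. q powi (TB k a j) * H q M (6*j - int a - 2))"
    by (simp add: beta_rep[OF hq a1] right_diff_distrib)
  also have "\<dots> = (\<Sum>\<^sub>\<infinity>j. q powi (TA k a j) * qbinom q (2*int M) (int M - (6*j - int a)))
     - (\<Sum>\<^sub>\<infinity>j. q powi (TB k a j) * qbinom q (2*int M) (int M - (6*j - int a - 2)))"
    unfolding infsum_cmult_right'[symmetric]
    by (simp add: P_def mult.left_commute[of "qpoch q q (2*M)"] PH[OF hq])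
  also have "\<dots> = (\<Sum>\<^sub>\<infinity>j :: int.
            q powi (12*(2+3*int k)*j^2 + 2*j*(1 - 6*\<delta>*(1+int k)) + (1+int k)*\<delta>)
            * qbinom q (2*int M) (int M - 6*j + int a))
         - (\<Sum>\<^sub>\<infinity>j :: int.
            q powi (12*(2+3*int k)*j^2 + 2*j*(-7 - 12*int k - 6*\<delta>*(1+int k)) + 2
                    + int k*(int a+2)^2 + 5*\<delta>)
            * qbinom q (2*int M) (int M - 6*j + int a + 2))"
  proof -
    have e1: "int M - (6*j - int a) = int M - 6*j + int a" for j :: int by simp
    have e2: "int M - (6*j - int a - 2) = int M - 6*j + int a + 2" for j :: int by simp
    show ?thesis unfolding e1 e2 TA_def TB_def dl ..
  qed
  finally show ?thesis unfolding set tm P_def .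
qed


end
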